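(* Let $F$ be an algebraically closed field of characteristic $\neq 2$, $R=F[t]$ with the involution ${}^*$ described in the context. Let $0\le r\le n$ and let $f_1,\ldots,f_n$ be a sequence of homogeneous elements of $R$ such that $f_1,\ldots,f_r$ are monic, each dividing the next one, and $f_{r+1}=\cdots=f_n=0$. Then $f_1,\ldots,f_n$ is the list of invariant factors of some hermitian (resp. skew-hermitian) matrix $A\in M_n(R)$ of rank $r$ if and only if the following two conditions hold: (i) every maximal run $f_i,f_{i+1},\ldots,f_j$ of consecutive terms that are nonzero and odd (resp. nonzero and even) has even length $j-i+1$; write such a run as $g_i,h_i,g_{i+2},h_{i+2},\ldots,g_{j-1},h_{j-1}$ (so $g_k=f_k$, $h_k=f_{k+1}$ for $k=i,i+2,\ldots,j-1$); (ii) for each such pair $(g_k,h_k)$ one has $h_k=g_kp_kp_k^*$ for some pure $p_k\in R$.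
   Context: $R=F[t]$ is the polynomial ring over $F$, and ${}^*$ is the $F$-algebra involution of $R$ that is the identity on $F$ and sends $t$ to $-t$. An element $a\in R$ is even if $a^*=a$, odd if $a^*=-a$, and homogeneous if it is even or odd. A nonzero $a\in R$ is pure if $\gcd(a,a^* )=1$. For $A=(a_{ij})\in M_n(R)$, $A^*$ is the matrix whose $(i,j)$ entry is $a_{ji}^*$; $A$ is hermitian if $A^*=A$ and skew-hermitian if $A^*=-A$. The invariant factors of $A$ are the diagonal entries of its Smith normal form over the PID $R$, the nonzero ones normalized to be monic. *)

theory Defs
  imports "HOL-Computational_Algebra.Polynomial" "Jordan_Normal_Form.Determinant"
    "Jordan_Normal_Form.DL_Submatrix"
begin

definition pstar :: "'a::comm_ring_1 poly \<Rightarrow> 'a poly" where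
  "pstar p = pcompose p [:0, -1:]"

definition even_poly :: "'a::comm_ring_1 poly \<Rightarrow> bool" where
  "even_poly a \<longleftrightarrow> pstar a = a"

definition odd_poly :: "'a::comm_ring_1 poly \<Rightarrow> bool" where
  "odd_poly a \<longleftrightarrow> pstar a = - a"

definition homogeneous :: "'a::comm_ring_1 poly \<Rightarrow> bool" where
  "homogeneous a \<longleftrightarrow> even_poly a \<or> odd_poly a"

definition pure :: "'a::field poly \<Rightarrow> bool" where
  "pure a \<longleftrightarrow> a \<noteq> 0 \<and> coprime a (pstar a)"

definition mat_star :: "'a::comm_ring_1 poly mat \<Rightarrow> 'a poly mat" where
  "mat_star A = mat (dim_col A) (dim_row A) (\<lambda>(i,j). pstar (A $$ (j,i)))"

definition hermitian :: "'a::comm_ring_1 poly mat \<Rightarrow> bool" where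
  "hermitian A \<longleftrightarrow> mat_star A = A"

definition skew_hermitian :: "'a::comm_ring_1 poly mat \<Rightarrow> bool" where
  "skew_hermitian A \<longleftrightarrow> mat_star A = - A"

definition diag_list :: "'a::zero list \<Rightarrow> 'a mat" where
  "diag_list fs = mat (length fs) (length fs) (\<lambda>(i,j). if i = j then fs ! i else 0)"

definition invariant_factors :: "'a::field poly mat \<Rightarrow> 'a poly list \<Rightarrow> bool" where
  "invariant_factors A fs \<longleftrightarrow>
     (let n = length fs in
      A \<in> carrier_mat n n \<and>
      (\<forall>i. i + 1 < n \<longrightarrow> fs ! i dvd fs ! (i + 1)) \<and>
      (\<forall>i < n. fs ! i \<noteq> 0 \<longrightarrow> lead_coeff (fs ! i) = 1) \<and>
      (\<exists>P Q. P \<in> carrier_mat n n \<and> Q \<in> carrier_mat n n \<and>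
             invertible_mat P \<and> invertible_mat Q \<and> P * A * Q = diag_list fs))"

definition det_rank :: "'a::idom mat \<Rightarrow> nat" where
  "det_rank A = Max {k. \<exists>I J. I \<subseteq> {..<dim_row A} \<and> J \<subseteq> {..<dim_col A} \<and>
      card I = k \<and> card J = k \<and> det (submatrix A I J) \<noteq> 0}"

text \<open>Positions i..j (0-based, inclusive) form a maximal run of consecutive
  entries satisfying P.\<close>
definition maximal_run :: "('b \<Rightarrow> bool) \<Rightarrow> 'b list \<Rightarrow> nat \<Rightarrow> nat \<Rightarrow> bool" where
  "maximal_run P fs i j \<longleftrightarrow> i \<le> j \<and> j < length fs \<and>
     (\<forall>k. i \<le> k \<and> k \<le> j \<longrightarrow> P (fs ! k)) \<and>
     (i = 0 \<or> \<not> P (fs ! (i - 1))) \<and>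
     (j + 1 = length fs \<or> \<not> P (fs ! (j + 1)))"

definition run_conditions :: "('a::field poly \<Rightarrow> bool) \<Rightarrow> 'a poly list \<Rightarrow> bool" where
  "run_conditions P fs \<longleftrightarrow>
     (\<forall>i j. maximal_run P fs i j \<longrightarrow>
        even (j - i + 1) \<and>
        (\<forall>k. i \<le> k \<and> k < j \<and> even (k - i) \<longrightarrow>
           (\<exists>p. pure p \<and> fs ! (k + 1) = fs ! k * p * pstar p)))"

end

theory Submission
  imports Defs
begin


lemma coeff_pstar: "coeff (pstar p) i = (-1)^i * coeff (p::'a::comm_ring_1 poly) i"
proof (induction p arbitrary: i rule: pCons_induct)
  case 0
  then show ?case by (simp add: pstar_def)
next
  case (pCons a p)
  have e: "pstar (pCons a p) = [:a:] + pCons 0 (- pstar p)"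
    unfolding pstar_def by (simp add: pcompose_pCons)
  show ?case
  proof (cases i)
    case 0 then show ?thesis by (simp add: e)
  next
    case (Suc j) then show ?thesis using pCons.IH[of j] by (simp add: e)
  qed
qed

lemma pstar_add[simp]: "pstar (p + q) = pstar p + pstar q"
  by (simp add: pstar_def pcompose_add)
lemma pstar_mult[simp]: "pstar (p * q) = pstar p * pstar (q::'a::comm_ring_1 poly)"
  by (simp add: pstar_def pcompose_mult)
lemma pstar_uminus[simp]: "pstar (- p) = - pstar (p::'a::comm_ring_1 poly)"
  by (simp add: pstar_def pcompose_uminus)
lemma pstar_diff[simp]: "pstar (p - q) = pstar p - pstar (q::'a::comm_ring_1 poly)"
  by (simp add: pstar_def pcompose_diff)
lemma pstar_0[simp]: "pstar 0 = 0" by (simp add: pstar_def)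
lemma pstar_1[simp]: "pstar 1 = (1::'a::comm_ring_1 poly)" by (simp add: pstar_def one_pCons)
lemma pstar_const[simp]: "pstar [:c:] = [:c::'a::comm_ring_1:]" by (simp add: pstar_def)
lemma pstar_pstar[simp]: "pstar (pstar p) = (p::'a::comm_ring_1 poly)"
  by (rule poly_eqI) (simp add: coeff_pstar power_mult_distrib[symmetric])
lemma pstar_sum: "pstar (sum f A) = (\<Sum>i\<in>A. pstar (f i :: 'a::comm_ring_1 poly))"
  by (simp add: pstar_def pcompose_sum)
lemma pstar_eq_0_iff[simp]: "pstar p = 0 \<longleftrightarrow> (p::'a::comm_ring_1 poly) = 0"
  by (metis pstar_0 pstar_pstar)
lemma poly_pstar0[simp]: "poly (pstar p) 0 = poly (p::'a::comm_ring_1 poly) 0"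
  by (simp add: pstar_def poly_pcompose)
lemma poly_pstar: "poly (pstar p) x = poly (p::'a::comm_ring_1 poly) (-x)"
  by (simp add: pstar_def poly_pcompose)
lemma pstar_inj: "pstar p = pstar q \<longleftrightarrow> p = (q::'a::comm_ring_1 poly)"
  by (metis pstar_pstar)

interpretation pstar_hom: comm_ring_hom "pstar :: 'a::comm_ring_1 poly \<Rightarrow> _"
  by (unfold_locales, auto)
interpretation ev0: comm_ring_hom "\<lambda>p. poly p (0::'a::comm_ring_1)"
  by (unfold_locales, auto)

lemma coeff_order0_nz:
  fixes f :: "'a::idom poly" assumes "f \<noteq> 0"
  shows "coeff f (order 0 f) \<noteq> 0"
proof -
  define v where "v = order 0 f"
  have "monom 1 v dvd f" using assms by (simp add: monom_1_dvd_iff v_def)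
  then obtain u where u: "f = monom 1 v * u" by blast
  with assms have "u \<noteq> 0" by auto
  have "order 0 f = v + order 0 u" using u assms by (simp add: order_mult)
  then have "order 0 u = 0" by (simp add: v_def)
  then have "poly u 0 \<noteq> 0" using \<open>u \<noteq> 0\<close> by (simp add: order_root)
  moreover have "coeff f v = coeff u 0" using u by (simp add: coeff_monom_mult)
  ultimately show ?thesis by (simp add: poly_0_coeff_0 v_def)
qed

lemma even_order:
  fixes f :: "'a::field poly"
  assumes "f \<noteq> 0" and "pstar f = f" and "(2::'a) \<noteq> 0"
  shows "even (order 0 f)"
proof (rule ccontr)
  assume o: "odd (order 0 f)"
  have "coeff (pstar f) (order 0 f) = coeff f (order 0 f)" using assms by simp
  then have "- coeff f (order 0 f) = coeff f (order 0 f)" using o by (simp add: coeff_pstar)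
  then have "2 * coeff f (order 0 f) = 0" by (simp add: algebra_simps)
  then show False using assms coeff_order0_nz[OF assms(1)] by simp
qed

lemma odd_order:
  fixes f :: "'a::field poly"
  assumes "f \<noteq> 0" and "pstar f = - f" and "(2::'a) \<noteq> 0"
  shows "odd (order 0 f)"
proof
  assume o: "even (order 0 f)"
  have "coeff (pstar f) (order 0 f) = - coeff f (order 0 f)" using assms by simp
  then have "- coeff f (order 0 f) = coeff f (order 0 f)" using o by (simp add: coeff_pstar)
  then have "2 * coeff f (order 0 f) = 0" by (simp add: algebra_simps)
  then show False using assms coeff_order0_nz[OF assms(1)] by simp
qed

lemma mat_star_dims[simp]: "dim_row (mat_star A) = dim_col A" "dim_col (mat_star A) = dim_row A"
  by (simp_all add: mat_star_def)
lemma mat_star_index[simp]: "i < dim_col A \<Longrightarrow> j < dim_row A \<Longrightarrow> mat_star A $$ (i,j) = pstar (A $$ (j,i))"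
  by (simp add: mat_star_def)
lemma mat_star_carrier[simp]: "A \<in> carrier_mat n m \<Longrightarrow> mat_star A \<in> carrier_mat m n"
  by (metis carrier_matD carrier_matI mat_star_dims)
lemma mat_star_mat_star[simp]: "mat_star (mat_star A) = (A :: 'a::comm_ring_1 poly mat)"
proof (rule eq_matI)
  fix i j assume "i < dim_row A" "j < dim_col A"
  then show "mat_star (mat_star A) $$ (i, j) = A $$ (i, j)" by simp
qed simp_all
lemma mat_star_one[simp]: "mat_star (1\<^sub>m n) = (1\<^sub>m n :: 'a::comm_ring_1 poly mat)"
proof (rule eq_matI)
  fix i j assume "i < dim_row (1\<^sub>m n :: 'a poly mat)" "j < dim_col (1\<^sub>m n :: 'a poly mat)"
  then show "mat_star (1\<^sub>m n) $$ (i, j) = (1\<^sub>m n :: 'a poly mat) $$ (i, j)" by simp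
qed simp_all

lemma mat_star_mult:
  assumes "A \<in> carrier_mat nr n" "B \<in> carrier_mat n nc"
  shows "mat_star (A * B) = mat_star B * (mat_star A :: 'a::comm_ring_1 poly mat)"
proof (rule eq_matI)
  fix i j assume ij: "i < dim_row (mat_star B * mat_star A)" "j < dim_col (mat_star B * mat_star A)"
  then have i: "i < nc" and j: "j < nr" using assms by auto
  have "mat_star (A * B) $$ (i,j) = pstar (row A j \<bullet> col B i)"
    using assms i j by auto
  also have "\<dots> = (\<Sum>k<n. pstar (A $$ (j,k)) * pstar (B $$ (k,i)))"
    using assms i j by (simp add: scalar_prod_def pstar_sum lessThan_atLeast0)
  also have "\<dots> = row (mat_star B) i \<bullet> col (mat_star A) j"
    using assms i j by (simp add: scalar_prod_def lessThan_atLeast0 mult.commute)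
  also have "\<dots> = (mat_star B * mat_star A) $$ (i,j)" using assms i j by simp
  finally show "mat_star (A * B) $$ (i, j) = (mat_star B * mat_star A) $$ (i, j)" .
qed (use assms in simp_all)

lemma inv_mat_ex:
  assumes "invertible_mat A" "A \<in> carrier_mat n n"
  obtains B where "B \<in> carrier_mat n n" "A * B = 1\<^sub>m n" "B * A = 1\<^sub>m n"
proof -
  from assms obtain B where AB: "A * B = 1\<^sub>m n" and BA: "B * A = 1\<^sub>m (dim_row B)"
    unfolding invertible_mat_def inverts_mat_def by auto
  have "dim_col B = n" using AB by (metis index_mult_mat(3) index_one_mat(3))
  moreover have "dim_row B = n" using BA assms
    by (metis carrier_matD(2) index_mult_mat(3) index_one_mat(3))
  ultimately have "B \<in> carrier_mat n n" by auto
  with AB BA \<open>dim_row B = n\<close> show ?thesis using that by auto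
qed


lemma block_det:
  fixes M :: "'a::field mat"
  assumes M: "M \<in> carrier_mat (a + m) (a + m)" and d: "det M \<noteq> 0"
    and z: "\<And>i j. a \<le> i \<Longrightarrow> i < a + m \<Longrightarrow> j < a \<Longrightarrow> M $$ (i,j) = 0"
  shows "det (mat a a (\<lambda>(i,j). M $$ (i,j))) \<noteq> 0"
    "det (mat m m (\<lambda>(i,j). M $$ (i+a,j+a))) \<noteq> 0"
proof -
  obtain A1 A2 A3 A4 where sb: "split_block M a a = (A1,A2,A3,A4)" by (metis prod_cases4)
  note S = split_block[OF sb, of m m]
  have A1: "A1 = mat a a (\<lambda>(i,j). M $$ (i,j))" and A4: "A4 = mat m m (\<lambda>(i,j). M $$ (i+a,j+a))"
    and A3: "A3 = mat m a (\<lambda>(i,j). M $$ (i+a,j))"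
    using sb M unfolding split_block_def Let_def by auto
  have A30: "A3 = 0\<^sub>m m a" unfolding A3 by (rule eq_matI) (auto simp: z)
  have "det M = det A1 * det A4"
    using S M by (metis A30 carrier_matD det_four_block_mat_lower_left_zero)
  with d A1 A4 show "det (mat a a (\<lambda>(i,j). M $$ (i,j))) \<noteq> 0"
    "det (mat m m (\<lambda>(i,j). M $$ (i+a,j+a))) \<noteq> 0" by auto
qed

lemma skew_odd_det:
  fixes M :: "'a::field mat"
  assumes M: "M \<in> carrier_mat L L" and sk: "\<And>i j. i < L \<Longrightarrow> j < L \<Longrightarrow> M $$ (i,j) = - M $$ (j,i)"
    and o: "odd L" and two: "(2::'a) \<noteq> 0"
  shows "det M = 0"
proof -
  have T: "transpose_mat M = (-1) \<cdot>\<^sub>m M"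
  proof (rule eq_matI)
    fix i j assume "i < dim_row ((-1) \<cdot>\<^sub>m M)" "j < dim_col ((-1) \<cdot>\<^sub>m M)"
    then have "i < L" "j < L" using M by auto
    then show "transpose_mat M $$ (i, j) = ((-1) \<cdot>\<^sub>m M) $$ (i, j)"
      using M sk[of j i] by simp
  qed (use M in simp_all)
  have "det M = det (transpose_mat M)" using det_transpose[OF M] by simp
  also have "\<dots> = (-1)^L * det M" unfolding T using M by simp
  also have "\<dots> = - det M" using o by simp
  finally have "2 * det M = 0" by simp
  then show ?thesis using two by simp
qed


lemma mult_diag_list:
  assumes A: "A \<in> carrier_mat m n" and l: "length fs = n" and i: "i < m" and j: "j < n"
  shows "(A * diag_list fs) $$ (i,j) = A $$ (i,j) * fs ! j"
proof -
  have "(A * diag_list fs) $$ (i,j) = (\<Sum>k\<in>{0..<n}. A $$ (i,k) * (if k = j then fs ! k else 0))"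
    using A l i j by (simp add: diag_list_def scalar_prod_def)
  also have "\<dots> = (\<Sum>k\<in>{0..<n}. if k = j then A $$ (i,k) * fs ! k else 0)"
    by (rule sum.cong) auto
  also have "\<dots> = A $$ (i,j) * fs ! j" using j by (simp add: sum.delta')
  finally show ?thesis .
qed

lemma diag_list_dims[simp]: "dim_row (diag_list fs) = length fs" "dim_col (diag_list fs) = length fs"
  by (simp_all add: diag_list_def)

lemma diag_list_carrier[simp]: "diag_list fs \<in> carrier_mat (length fs) (length fs)"
  by (simp add: diag_list_def)

lemma order0_pstar: "order 0 (pstar p) = order 0 (p::'a::idom poly)"
proof (cases "p = 0")
  case True then show ?thesis by simp
next
  case False
  have pm: "pstar (monom 1 k) = smult ((-1)^k) (monom (1::'a) k)" for k
    by (rule poly_eqI) (simp add: coeff_pstar coeff_monom)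
  have key: "order 0 q \<le> order 0 (pstar q)" if "q \<noteq> 0" for q :: "'a poly"
  proof -
    have "monom 1 (order 0 q) dvd q" using that by (simp add: monom_1_dvd_iff)
    then have "pstar (monom 1 (order 0 q)) dvd pstar q" by (rule pstar_hom.hom_dvd)
    then have "smult ((-1)^order 0 q) (monom 1 (order 0 q)) dvd pstar q" by (simp add: pm)
    then have "monom 1 (order 0 q) dvd pstar q"
      by (rule smult_dvd_cancel)
    then show ?thesis using that by (simp add: monom_1_dvd_iff)
  qed
  show ?thesis using key[of p] key[of "pstar p"] False by simp
qed

lemma order0_uminus[simp]: "order 0 (- p) = order 0 (p::'a::idom poly)"
  by (rule order_uminus)


locale core_setup =
  fixes fs :: "'a::field poly list" and n r :: nat and c :: "'a poly" and W W' :: "'a poly mat"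
  assumes two: "(2::'a) \<noteq> 0"
    and len: "length fs = n" and rn: "r \<le> n"
    and nz: "\<And>i. i < r \<Longrightarrow> fs ! i \<noteq> 0"
    and zr: "\<And>i. r \<le> i \<Longrightarrow> i < n \<Longrightarrow> fs ! i = 0"
    and hom: "\<And>i. i < n \<Longrightarrow> homogeneous (fs ! i)"
    and dv: "\<And>i. i + 1 < r \<Longrightarrow> fs ! i dvd fs ! (i + 1)"
    and W: "W \<in> carrier_mat n n" and W': "W' \<in> carrier_mat n n" and WW: "W * W' = 1\<^sub>m n"
    and c: "c = 1 \<or> c = -1"
    and herm: "mat_star (W * diag_list fs) = c \<cdot>\<^sub>m (W * diag_list fs)"
begin

abbreviation "ord m \<equiv> order 0 (fs ! m)"

lemma mono_ord: "i \<le> j \<Longrightarrow> j < r \<Longrightarrow> ord i \<le> ord j"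
proof (induction j)
  case 0 then show ?case by simp
next
  case (Suc j)
  show ?case
  proof (cases "i = Suc j")
    case True then show ?thesis by simp
  next
    case False
    then have "i \<le> j" using Suc by simp
    then have "ord i \<le> ord j" using Suc by simp
    also have "ord j \<le> ord (Suc j)"
      using dv[of j] nz[of "Suc j"] Suc.prems by (simp add: dvd_imp_order_le)
    finally show ?thesis .
  qed
qed

lemma entry:
  assumes "i < n" "j < n"
  shows "pstar (W $$ (j,i)) * pstar (fs ! i) = c * (W $$ (i,j) * fs ! j)"
proof -
  have "mat_star (W * diag_list fs) $$ (i,j) = (c \<cdot>\<^sub>m (W * diag_list fs)) $$ (i,j)"
    by (simp add: herm)
  moreover have "mat_star (W * diag_list fs) $$ (i,j) = pstar ((W * diag_list fs) $$ (j,i))"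
    using assms W len by simp
  moreover have "(W * diag_list fs) $$ (j,i) = W $$ (j,i) * fs ! i"
    using mult_diag_list[OF W len] assms by simp
  moreover have "(c \<cdot>\<^sub>m (W * diag_list fs)) $$ (i,j) = c * (W $$ (i,j) * fs ! j)"
    using mult_diag_list[OF W len] assms W len by simp
  ultimately show ?thesis by simp
qed

lemma cases_c: "c * c = 1" "c \<noteq> 0" using c by auto

lemma hom_cases: "i < n \<Longrightarrow> pstar (fs ! i) = fs ! i \<or> pstar (fs ! i) = - (fs ! i)"
  using hom[of i] by (auto simp: homogeneous_def even_poly_def odd_poly_def)

lemma order_c_mult: "order 0 (c * p) = order 0 p"
  using c by auto

lemma zero_pattern:
  assumes i: "i < n" and j: "j < r" and cond: "r \<le> i \<or> (i < r \<and> ord j < ord i)"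
  shows "poly (W $$ (i,j)) 0 = 0"
proof -
  have jn: "j < n" using j rn by simp
  have E: "pstar (W $$ (i,j)) * pstar (fs ! j) = c * (W $$ (j,i) * fs ! i)"
    using entry[OF jn i] .
  have fj: "pstar (fs ! j) \<noteq> 0" using nz[OF j] by simp
  show ?thesis
  proof (cases "r \<le> i")
    case True
    then have "fs ! i = 0" using zr i by simp
    then have "W $$ (i,j) = 0" using E fj by simp
    then show ?thesis by simp
  next
    case False
    then have ir: "i < r" and lt: "ord j < ord i" using cond by auto
    show ?thesis
    proof (cases "W $$ (i,j) = 0")
      case True then show ?thesis by simp
    next
      case wz: False
      have lhs: "pstar (W $$ (i,j)) * pstar (fs ! j) \<noteq> 0" using wz fj by simp
      then have wji: "W $$ (j,i) \<noteq> 0" using E by auto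
      have "order 0 (pstar (W $$ (i,j)) * pstar (fs ! j)) = order 0 (W $$ (i,j)) + ord j"
        using lhs by (simp add: order_mult order0_pstar)
      also have "order 0 (pstar (W $$ (i,j)) * pstar (fs ! j)) = order 0 (W $$ (j,i) * fs ! i)"
        unfolding E by (rule order_c_mult)
      also have "\<dots> = order 0 (W $$ (j,i)) + ord i"
        using wji nz[OF ir] by (simp add: order_mult)
      finally have "order 0 (W $$ (i,j)) \<noteq> 0" using lt by linarith
      then show ?thesis by (simp add: order_root)
    qed
  qed
qed

lemma same_parity:
  assumes m: "m < r" and k: "k < r" and o: "ord m = ord k" and pk: "pstar (fs ! k) = - c * fs ! k"
  shows "pstar (fs ! m) = - c * fs ! m"
proof -
  have mn: "m < n" and kn: "k < n" using m k rn by auto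
  note hm = hom_cases[OF mn]
  from c show ?thesis
  proof
    assume c1: "c = 1"
    then have "pstar (fs ! k) = - fs ! k" using pk by simp
    then have "odd (ord k)" using odd_order nz[OF k] two by blast
    then have "odd (ord m)" using o by simp
    then have "pstar (fs ! m) \<noteq> fs ! m" using even_order nz[OF m] two by blast
    then show ?thesis using hm c1 by auto
  next
    assume c1: "c = -1"
    then have "pstar (fs ! k) = fs ! k" using pk by simp
    then have "even (ord k)" using even_order nz[OF k] two by blast
    then have "even (ord m)" using o by simp
    then have "pstar (fs ! m) \<noteq> - fs ! m" using odd_order nz[OF m] two by blast
    then show ?thesis using hm c1 by auto
  qed
qed


lemma det_W0: "det (map_mat (\<lambda>p. poly p 0) W) \<noteq> 0"
proof -
  have "map_mat (\<lambda>p. poly p 0) W * map_mat (\<lambda>p. poly p 0) W' = map_mat (\<lambda>p. poly p 0) (W * W')"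
    using ev0.mat_hom_mult[OF W W'] by simp
  also have "\<dots> = 1\<^sub>m n" unfolding WW by (rule ev0.mat_hom_one)
  finally have "det (map_mat (\<lambda>p. poly p 0) W) * det (map_mat (\<lambda>p. poly p 0) W') = 1"
    using det_mult[of "map_mat (\<lambda>p. poly p 0) W" n "map_mat (\<lambda>p. poly p 0) W'"] W W' by simp
  then show ?thesis by auto
qed

lemma even_class:
  assumes k: "k < r" and pk: "pstar (fs ! k) = - c * fs ! k"
  shows "even (card {m. m < r \<and> ord m = ord k})"
proof -
  define e where "e = ord k"
  define C where "C = {m. m < r \<and> ord m = e}"
  have finC: "finite C" unfolding C_def by simp
  have kC: "k \<in> C" using k by (simp add: C_def e_def)
  define a where "a = Min C"
  define b where "b = Suc (Max C)"
  have ne: "C \<noteq> {}" using kC by auto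
  have aC: "a \<in> C" and bC: "b - 1 \<in> C" using Min_in[OF finC ne] Max_in[OF finC ne] by (auto simp: a_def b_def)
  have Cab: "C = {a..<b}"
  proof
    show "C \<subseteq> {a..<b}" using finC by (auto simp: a_def b_def less_Suc_eq_le)
  next
    show "{a..<b} \<subseteq> C"
    proof
      fix m assume m: "m \<in> {a..<b}"
      have br: "b - 1 < r" using bC by (simp add: C_def)
      have "ord a \<le> ord m" using m br by (intro mono_ord) auto
      moreover have "ord m \<le> ord (b - 1)" using m br by (intro mono_ord) auto
      ultimately show "m \<in> C" using aC bC m br by (auto simp: C_def)
    qed
  qed
  have ab: "a < b" using Cab kC by auto
  have br: "b \<le> r" using bC ab by (auto simp: C_def)
  define L where "L = b - a"
  have cardC: "card C = L" by (simp add: Cab L_def)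
  define W0 where "W0 = map_mat (\<lambda>p. poly p 0) W"
  have W0: "W0 \<in> carrier_mat (a + (n - a)) (a + (n - a))" using W ab br rn by (auto simp: W0_def)
  have W0i: "W0 $$ (i,j) = poly (W $$ (i,j)) 0" if "i < n" "j < n" for i j
    using that W by (simp add: W0_def)
  define Z where "Z = mat (n - a) (n - a) (\<lambda>(i,j). W0 $$ (i+a, j+a))"
  have dZ: "det Z \<noteq> 0"
    unfolding Z_def
  proof (rule block_det(2)[OF W0])
    show "det W0 \<noteq> 0" using det_W0 by (simp add: W0_def)
  next
    fix i j assume ij: "a \<le> i" "i < a + (n - a)" "j < a"
    have "j \<notin> C" using ij(3) Cab by auto
    moreover have jr: "j < r" using ij ab br by auto
    ultimately have "ord j \<noteq> e" by (auto simp: C_def)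
    moreover have "ord j \<le> ord a" using jr ij ab br by (intro mono_ord) auto
    ultimately have lt: "ord j < e" using aC by (auto simp: C_def)
    have "r \<le> i \<or> (i < r \<and> ord j < ord i)"
    proof (cases "r \<le> i")
      case False
      then have "ord a \<le> ord i" using ij by (intro mono_ord) auto
      then show ?thesis using False lt aC by (auto simp: C_def)
    qed simp
    then show "W0 $$ (i, j) = 0" using zero_pattern[of i j] ij jr rn W0i by auto
  qed
  have Z: "Z \<in> carrier_mat (L + (n - a - L)) (L + (n - a - L))"
    using ab br rn by (auto simp: Z_def L_def)
  define Ms where "Ms = mat L L (\<lambda>(i,j). Z $$ (i,j))"
  have dMs: "det Ms \<noteq> 0"
    unfolding Ms_def
  proof (rule block_det(1)[OF Z dZ])
    fix i j assume ij: "L \<le> i" "i < L + (n - a - L)" "j < L"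
    have jC: "j + a \<in> C" using ij Cab by (auto simp: L_def)
    have iC: "i + a \<notin> C" using ij Cab by (auto simp: L_def)
    have jr: "j + a < r" and oj: "ord (j + a) = e" using jC by (auto simp: C_def)
    have "r \<le> i + a \<or> (i + a < r \<and> ord (j + a) < ord (i + a))"
    proof (cases "r \<le> i + a")
      case False
      then have "ord (b - 1) \<le> ord (i + a)" using ij ab by (intro mono_ord) (auto simp: L_def)
      moreover have "ord (i + a) \<noteq> e" using iC False by (auto simp: C_def)
      ultimately show ?thesis using False bC oj by (auto simp: C_def)
    qed simp
    then have "poly (W $$ (i + a, j + a)) 0 = 0"
      using zero_pattern[of "i + a" "j + a"] ij jr ab br rn by (auto simp: L_def)
    then show "Z $$ (i, j) = 0" using ij ab br rn W0i by (auto simp: Z_def L_def)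
  qed
  have Msi: "Ms $$ (i,j) = poly (W $$ (i+a, j+a)) 0" if "i < L" "j < L" for i j
    using that ab br rn W0i by (auto simp: Ms_def Z_def L_def)
  define u where "u m = fs ! m div monom 1 e" for m
  have fu: "fs ! m = monom 1 e * u m" and u0: "poly (u m) 0 \<noteq> 0" if "m \<in> C" for m
  proof -
    have mr: "m < r" and om: "ord m = e" using that by (auto simp: C_def)
    have "monom 1 e dvd fs ! m" using nz[OF mr] om by (simp add: monom_1_dvd_iff)
    then show fm: "fs ! m = monom 1 e * u m" by (simp add: u_def)
    have "u m \<noteq> 0" using fm nz[OF mr] by auto
    moreover have "ord m = e + order 0 (u m)"
      using nz[OF mr] by (subst fm, subst order_mult) (use fm in auto)
    ultimately show "poly (u m) 0 \<noteq> 0" using om by (simp add: order_root)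
  qed
  define ds where "ds = map (\<lambda>j. poly (u (j + a)) 0) [0..<L]"
  have lds: "length ds = L" by (simp add: ds_def)
  define M where "M = Ms * diag_list ds"
  have Ms: "Ms \<in> carrier_mat L L" by (simp add: Ms_def)
  have M: "M \<in> carrier_mat L L" unfolding M_def by (rule mult_carrier_mat[OF Ms]) (use diag_list_carrier[of ds] lds in simp)
  have Mi: "M $$ (i,j) = poly (W $$ (i+a, j+a)) 0 * poly (u (j + a)) 0" if "i < L" "j < L" for i j
    using mult_diag_list[OF Ms lds that] Msi[OF that] that by (simp add: M_def ds_def)
  have dD: "det (diag_list ds) \<noteq> 0"
  proof -
    have "det (diag_list ds) = prod_list (diag_mat (diag_list ds))"
      by (rule det_upper_triangular[of _ L]) (auto simp: diag_list_def lds)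
    also have "diag_mat (diag_list ds) = ds"
      by (rule nth_equalityI) (auto simp: diag_mat_def diag_list_def)
    finally show ?thesis
      using u0 Cab by (auto simp: ds_def prod_list_zero_iff L_def)
  qed
  have dM: "det M \<noteq> 0" using det_mult[OF Ms, of "diag_list ds"] diag_list_carrier[of ds] lds dMs dD by (simp add: M_def)
  have sk: "M $$ (i,j) = - M $$ (j,i)" if ij: "i < L" "j < L" for i j
  proof -
    define I where "I = i + a"
    define J where "J = j + a"
    have IC: "I \<in> C" and JC: "J \<in> C" using ij Cab by (auto simp: I_def J_def L_def)
    then have In: "I < n" "J < n" "I < r" using rn by (auto simp: C_def)
    have pI: "pstar (fs ! I) = - c * fs ! I"
      using same_parity[of I k] IC pk k by (auto simp: C_def e_def)
    have E: "pstar (W $$ (J,I)) * pstar (fs ! I) = c * (W $$ (I,J) * fs ! J)"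
      using entry[OF In(1,2)] .
    then have "c * (pstar (W $$ (J,I)) * (- c * fs ! I)) = c * (c * (W $$ (I,J) * fs ! J))"
      using pI by simp
    then have "- (pstar (W $$ (J,I)) * fs ! I) = W $$ (I,J) * fs ! J"
    proof -
      have cc: "c * (c * z) = z" for z using cases_c(1) by (simp add: mult.assoc[symmetric])
      from \<open>c * (pstar (W $$ (J,I)) * (- c * fs ! I)) = c * (c * (W $$ (I,J) * fs ! J))\<close>
      have "- (c * (c * (pstar (W $$ (J,I)) * fs ! I))) = c * (c * (W $$ (I,J) * fs ! J))"
        by (simp add: algebra_simps)
      then show ?thesis by (simp only: cc)
    qed
    then have "monom 1 e * (- (pstar (W $$ (J,I)) * u I)) = monom 1 e * (W $$ (I,J) * u J)"
      using fu[OF IC] fu[OF JC] by (simp add: algebra_simps)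
    then have "- (pstar (W $$ (J,I)) * u I) = W $$ (I,J) * u J"
    proof -
      assume h: "monom 1 e * (- (pstar (W $$ (J,I)) * u I)) = monom 1 e * (W $$ (I,J) * u J)"
      have "monom (1::'a) e \<noteq> 0" by (simp add: monom_eq_0_iff)
      with h show ?thesis by (simp only: mult_cancel_left) simp
    qed
    then have "poly (- (pstar (W $$ (J,I)) * u I)) 0 = poly (W $$ (I,J) * u J) 0" by simp
    then have "- (poly (W $$ (J,I)) 0 * poly (u I) 0) = poly (W $$ (I,J)) 0 * poly (u J) 0" by simp
    then show ?thesis using Mi[OF ij] Mi[OF ij(2,1)] by (simp add: I_def J_def)
  qed
  have "even L"
  proof (rule ccontr)
    assume "odd L"
    then have "det M = 0" using skew_odd_det[OF M sk _ two] by blast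
    then show False using dM by simp
  qed
  then show ?thesis using cardC by (simp add: C_def e_def)
qed

end


lemma coprime_roots:
  fixes a b :: "'a::alg_closed_field poly"
  assumes "a \<noteq> 0"
  shows "coprime a b \<longleftrightarrow> (\<forall>z. \<not> (poly a z = 0 \<and> poly b z = 0))"
proof
  assume cp: "coprime a b"
  show "\<forall>z. \<not> (poly a z = 0 \<and> poly b z = 0)"
  proof (intro allI notI)
    fix z assume "poly a z = 0 \<and> poly b z = 0"
    then have "[:-z,1:] dvd a" "[:-z,1:] dvd b" by (auto simp: poly_eq_0_iff_dvd)
    then have "is_unit [:-z,1:]" using coprime_common_divisor cp by blast
    then show False by (simp add: is_unit_iff_degree)
  qed
next
  assume nr: "\<forall>z. \<not> (poly a z = 0 \<and> poly b z = 0)"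
  show "coprime a b"
  proof (rule ccontr)
    assume "\<not> coprime a b"
    then obtain d where d: "d dvd a" "d dvd b" "\<not> is_unit d" by (auto simp: coprime_def)
    have g0: "d \<noteq> 0" using assms d by auto
    then have "degree d > 0" using d(3) is_unit_iff_degree by blast
    then obtain z where "poly d z = 0" using alg_closed_imp_poly_has_root by blast
    then have "poly a z = 0" "poly b z = 0"
      using d by (metis poly_eq_0_iff_dvd dvd_trans)+
    then show False using nr by blast
  qed
qed

lemma pure_roots:
  fixes p :: "'a::alg_closed_field poly"
  shows "pure p \<longleftrightarrow> p \<noteq> 0 \<and> (\<forall>z. \<not> (poly p z = 0 \<and> poly p (-z) = 0))"
  unfolding pure_def
  by (auto simp: coprime_roots poly_pstar)

lemma pstar_lin: "pstar [:a, b:] = [:a, -b::'a::comm_ring_1:]"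
  by (rule poly_eqI) (simp add: coeff_pstar coeff_pCons split: nat.splits)

lemma pure_factor:
  fixes q :: "'a::alg_closed_field poly"
  assumes two: "(2::'a) \<noteq> 0" and ev: "pstar q = q" and q0: "poly q 0 \<noteq> 0"
  shows "\<exists>p. pure p \<and> q = p * pstar p"
  using ev q0
proof (induction "degree q" arbitrary: q rule: less_induct)
  case less
  show ?case
  proof (cases "degree q = 0")
    case True
    then obtain c0 where q: "q = [:c0:]" by (metis degree_eq_zeroE)
    have c0: "c0 \<noteq> 0" using less.prems q by simp
    obtain y where y: "y ^ 2 = c0" using nth_root_exists[of 2 c0] by auto
    have y0: "y \<noteq> 0" using y c0 by auto
    have "is_unit [:y:]" using y0 by (simp add: is_unit_iff_degree)
    then have "pure [:y:]" unfolding pure_def using y0 by simp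
    moreover have "q = [:y:] * pstar [:y:]" using y q by (simp add: power2_eq_square)
    ultimately show ?thesis by blast
  next
    case False
    then obtain \<alpha> where r: "poly q \<alpha> = 0" using alg_closed_imp_poly_has_root by blast
    have a0: "\<alpha> \<noteq> 0" using r less.prems by auto
    have r': "poly q (-\<alpha>) = 0" using r less.prems(1) by (metis poly_pstar)
    have ne: "\<alpha> \<noteq> -\<alpha>"
    proof
      assume "\<alpha> = -\<alpha>"
      then have "2 * \<alpha> = 0" by simp
      then show False using two a0 by simp
    qed
    obtain q1 where q1: "q = [:-\<alpha>,1:] * q1" using r by (auto simp: poly_eq_0_iff_dvd)
    have "poly q1 (-\<alpha>) = 0" using r' q1 ne by auto
    then obtain q2 where q2: "q1 = [:\<alpha>,1:] * q2" by (auto simp: poly_eq_0_iff_dvd)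
    define h where "h = [:-\<alpha>,1:] * [:\<alpha>,1:]"
    have qh: "q = h * q2" using q1 q2 unfolding h_def by (simp only: mult.assoc)
    have h0: "h \<noteq> 0" by (simp add: h_def)
    have e1: "[:-\<alpha>,-1:] = -[:\<alpha>,1:]" and e2: "[:\<alpha>,-1:] = -[:-\<alpha>,1:]" by simp_all
    have ph: "pstar h = h" unfolding h_def pstar_mult pstar_lin e1 e2 by (simp add: mult.commute)
    have "h * pstar q2 = h * q2" using less.prems(1) qh ph by simp
    then have ev2: "pstar q2 = q2" using h0 by simp
    have pq2: "poly q2 0 \<noteq> 0" using less.prems(2) qh by simp
    have q20: "q2 \<noteq> 0" using pq2 by auto
    have "degree q = degree h + degree q2" using qh h0 q20 by (simp add: degree_mult_eq)
    moreover have "degree h = 2" by (simp add: h_def)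
    ultimately have "degree q2 < degree q" by simp
    from less.hyps[OF this ev2 pq2] obtain p2 where p2: "pure p2" "q2 = p2 * pstar p2" by blast
    have p2r: "p2 \<noteq> 0" "\<forall>z. \<not> (poly p2 z = 0 \<and> poly p2 (-z) = 0)" using p2(1) pure_roots by auto
    obtain \<beta> where b: "\<beta> = \<alpha> \<or> \<beta> = -\<alpha>" and nb: "poly p2 (-\<beta>) \<noteq> 0"
    proof (cases "poly p2 (-\<alpha>) = 0")
      case True
      then have "poly p2 \<alpha> \<noteq> 0" using p2r(2) by blast
      then show ?thesis using that[of "-\<alpha>"] by simp
    next
      case False then show ?thesis using that[of \<alpha>] by simp
    qed
    have b0: "\<beta> \<noteq> -\<beta>" using b ne by auto
    obtain \<iota> :: 'a where i: "\<iota> ^ 2 = -1" using nth_root_exists[of 2 "-1::'a"] by auto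
    have i0: "\<iota> \<noteq> 0" using i by auto
    define x where "x = smult \<iota> [:-\<beta>,1:]"
    define p where "p = p2 * x"
    have hx: "x * pstar x = h"
    proof -
      have px: "pstar x = smult \<iota> (- [:\<beta>,1:])"
        by (rule poly_eqI) (simp add: x_def coeff_pstar coeff_pCons split: nat.splits)
      have ii: "\<iota> * \<iota> = -1" using i by (simp add: power2_eq_square)
      have "x * pstar x = smult \<iota> [:-\<beta>,1:] * smult \<iota> (- [:\<beta>,1:])"
        by (simp only: px) (simp only: x_def)
      also have "\<dots> = smult (\<iota> * \<iota>) (- ([:-\<beta>,1:] * [:\<beta>,1:]))"
        by (simp only: mult_smult_left mult_smult_right smult_smult mult_minus_right smult_minus_right)
      also have "\<dots> = [:-\<beta>,1:] * [:\<beta>,1:]" unfolding ii by simp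
      also have "\<dots> = h" using b by (auto simp: h_def mult.commute)
      finally show ?thesis .
    qed
    have "q = p * pstar p" using qh p2(2) hx by (simp add: p_def algebra_simps)
    moreover have "pure p"
      unfolding pure_roots
    proof (intro conjI allI notI)
      have x0: "x \<noteq> 0" unfolding x_def using i0 by simp
      show "p = 0 \<Longrightarrow> False" using p2r(1) x0 by (simp add: p_def)
    next
      fix z assume zz: "poly p z = 0 \<and> poly p (-z) = 0"
      have px: "poly x w = 0 \<longleftrightarrow> w = \<beta>" for w using i0 by (auto simp: x_def)
      from zz have A: "poly p2 z = 0 \<or> z = \<beta>" and B: "poly p2 (-z) = 0 \<or> -z = \<beta>"
        by (auto simp: p_def px)
      show False
      proof (cases "z = \<beta>")
        case True
        then have "poly p2 (-\<beta>) = 0" using B b0 by auto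
        then show ?thesis using nb by simp
      next
        case False
        then have z: "poly p2 z = 0" using A by auto
        show ?thesis
        proof (cases "-z = \<beta>")
          case True then show ?thesis using z nb by auto
        next
          case False then show ?thesis using B z p2r(2) by auto
        qed
      qed
    qed
    ultimately show ?thesis by blast
  qed
qed


context core_setup begin

definition Pc :: "'a poly \<Rightarrow> bool" where "Pc a \<longleftrightarrow> a \<noteq> 0 \<and> pstar a = - c * a"

definition cls where "cls m = {m'. m' < r \<and> ord m' = ord m}"

lemma Pc_iff: "m < n \<Longrightarrow> Pc (fs ! m) \<longleftrightarrow> m < r \<and> pstar (fs ! m) = - c * fs ! m"
  unfolding Pc_def by (metis nz zr not_less)

lemma cls_props:
  assumes m: "m < r"
  shows "finite (cls m)" "m \<in> cls m" "\<And>x. x \<in> cls m \<longleftrightarrow> Min (cls m) \<le> x \<and> x \<le> Max (cls m)" "Max (cls m) < r"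
    "card (cls m) = Suc (Max (cls m)) - Min (cls m)"
proof -
  show fin: "finite (cls m)" by (simp add: cls_def)
  show mC: "m \<in> cls m" using m by (simp add: cls_def)
  then have ne: "cls m \<noteq> {}" by auto
  have aC: "Min (cls m) \<in> cls m" and bC: "Max (cls m) \<in> cls m" using Min_in[OF fin ne] Max_in[OF fin ne] by auto
  then show br: "Max (cls m) < r" by (simp add: cls_def)
  have eq: "cls m = {Min (cls m)..Max (cls m)}"
  proof
    show "cls m \<subseteq> {Min (cls m)..Max (cls m)}" using fin by auto
  next
    show "{Min (cls m)..Max (cls m)} \<subseteq> cls m"
    proof
      fix x assume x: "x \<in> {Min (cls m)..Max (cls m)}"
      have "ord (Min (cls m)) \<le> ord x" using x br by (intro mono_ord) auto
      moreover have "ord x \<le> ord (Max (cls m))" using x br by (intro mono_ord) auto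
      ultimately show "x \<in> cls m" using aC bC x br by (auto simp: cls_def)
    qed
  qed
  show "\<And>x. x \<in> cls m \<longleftrightarrow> Min (cls m) \<le> x \<and> x \<le> Max (cls m)"
    by (subst eq) simp
  show "card (cls m) = Suc (Max (cls m)) - Min (cls m)"
    by (subst eq) simp
qed

lemma cls_odd:
  assumes m: "m < r" and pm: "pstar (fs ! m) = - c * fs ! m"
  shows "odd (Max (cls m) - Min (cls m))" "Min (cls m) \<le> m" "m \<le> Max (cls m)"
proof -
  note cp = cls_props[OF m]
  have "even (card (cls m))" using even_class[OF m pm] by (simp add: cls_def)
  then have "even (Suc (Max (cls m)) - Min (cls m))" by (simp only: cp(5))
  moreover show "Min (cls m) \<le> m" "m \<le> Max (cls m)" using Min_le[OF cp(1) cp(2)] Max_ge[OF cp(1) cp(2)] by auto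
  ultimately show "odd (Max (cls m) - Min (cls m))" by (simp add: Suc_diff_le)
qed

lemma cls_same: "m < r \<Longrightarrow> x \<in> cls m \<Longrightarrow> cls x = cls m"
  by (auto simp: cls_def)

lemma run_basic:
  assumes run: "maximal_run Pc fs i j" and mi: "i \<le> m" "m \<le> j"
  shows "m < r" "pstar (fs ! m) = - c * fs ! m" "i \<le> Min (cls m)" "Max (cls m) \<le> j"
proof -
  have jn: "j < n" using run len by (simp add: maximal_run_def)
  have Pm: "Pc (fs ! m)" using run mi by (simp add: maximal_run_def)
  then show mr: "m < r" and pm: "pstar (fs ! m) = - c * fs ! m" using Pc_iff[of m] mi jn by auto
  note cp = cls_props[OF mr]
  have inP: "Pc (fs ! x)" if "x \<in> cls m" for x
  proof -
    have "x < r" "ord x = ord m" using that by (auto simp: cls_def)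
    then show ?thesis using same_parity[of x m] mr pm Pc_iff[of x] rn by auto
  qed
  show "Max (cls m) \<le> j"
  proof (rule ccontr)
    assume "\<not> Max (cls m) \<le> j"
    then have "Min (cls m) \<le> j + 1 \<and> j + 1 \<le> Max (cls m)" using cls_odd(2)[OF mr pm] mi by linarith
    then have "j + 1 \<in> cls m" using cp(3)[of "j + 1"] by blast
    then have "Pc (fs ! (j + 1))" by (rule inP)
    moreover have "j + 1 < length fs" using \<open>j + 1 \<in> cls m\<close> rn len by (auto simp: cls_def)
    ultimately show False using run by (simp add: maximal_run_def)
  qed
  show "i \<le> Min (cls m)"
  proof (rule ccontr)
    assume "\<not> i \<le> Min (cls m)"
    then have "Min (cls m) \<le> i - 1 \<and> i - 1 \<le> Max (cls m)" using cls_odd(3)[OF mr pm] mi by linarith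
    then have "i - 1 \<in> cls m" using cp(3)[of "i - 1"] by blast
    then have "Pc (fs ! (i - 1))" by (rule inP)
    moreover have "i \<noteq> 0" using \<open>\<not> i \<le> Min (cls m)\<close> by auto
    ultimately show False using run by (simp add: maximal_run_def)
  qed
qed

lemma run_props:
  assumes run: "maximal_run Pc fs i j"
  shows "even (j - i + 1)" "\<And>k. i \<le> k \<Longrightarrow> k < j \<Longrightarrow> even (k - i) \<Longrightarrow> ord (k + 1) = ord k"
proof -
  have ij: "i \<le> j" using run by (simp add: maximal_run_def)
  have claim: "i + 2 * d \<le> j \<Longrightarrow> even (i + 2 * d - Min (cls (i + 2 * d)))" for d
  proof (induction d)
    case 0
    have "i \<le> Min (cls i)" using run_basic[OF run, of i] ij by simp
    moreover have "Min (cls i) \<le> i" using run_basic[OF run, of i] ij cls_odd(2) by auto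
    ultimately show ?case by simp
  next
    case (Suc d)
    define m where "m = i + 2 * d"
    have mj: "m + 2 \<le> j" using Suc.prems by (simp add: m_def)
    have IH: "even (m - Min (cls m))" using Suc.IH mj by (simp add: m_def)
    have rb: "m < r" "pstar (fs ! m) = - c * fs ! m" using run_basic[OF run, of m] mj by (auto simp: m_def)
    note co = cls_odd[OF rb]
    note cp = cls_props[OF rb(1)]
    have mt: "m + 1 \<le> Max (cls m)"
    proof (rule ccontr)
      assume "\<not> m + 1 \<le> Max (cls m)"
      then have "Max (cls m) = m" using co by simp
      then show False using co(1) IH by simp
    qed
    have goal: "even (m + 2 - Min (cls (m + 2)))"
    proof (cases "m + 2 \<le> Max (cls m)")
      case True
      then have "Min (cls m) \<le> m + 2 \<and> m + 2 \<le> Max (cls m)" using co by linarith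
      then have "m + 2 \<in> cls m" using cp(3)[of "m + 2"] by blast
      then have "cls (m + 2) = cls m" using cls_same rb by blast
      then show ?thesis using IH co by (simp add: even_add)
    next
      case False
      then have tm: "Max (cls m) = m + 1" using mt by simp
      have m2r: "m + 2 < r" using run_basic[OF run, of "m + 2"] mj by (simp add: m_def)
      have "Min (cls (m + 2)) = m + 2"
      proof (rule ccontr)
        assume ne: "Min (cls (m + 2)) \<noteq> m + 2"
        have "Min (cls (m + 2)) \<le> m + 2" using Min_le[OF cls_props(1,2)[OF m2r]] .
        with ne have le: "Min (cls (m + 2)) \<le> m + 1" by simp
        have sC: "Min (cls (m + 2)) \<in> cls (m + 2)" using Min_in[OF cls_props(1)[OF m2r]] cls_props(2)[OF m2r] by blast
        then have "ord (Min (cls (m + 2))) = ord (m + 2)" by (simp add: cls_def)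
        moreover have "ord (Min (cls (m + 2))) \<le> ord (m + 1)" using le m2r by (intro mono_ord) auto
        moreover have "ord (m + 1) \<le> ord (m + 2)" using m2r by (intro mono_ord) auto
        ultimately have "ord (m + 1) = ord (m + 2)" by simp
        moreover have "Min (cls m) \<le> m + 1 \<and> m + 1 \<le> Max (cls m)" using co tm by linarith
        then have "m + 1 \<in> cls m" using cp(3)[of "m + 1"] by blast
        ultimately have "m + 2 \<in> cls m" using m2r by (simp add: cls_def)
        then show False using tm cp(3)[of "m + 2"] by linarith
      qed
      then show ?thesis by simp
    qed
    then show ?case by (simp add: m_def)
  qed
  have pair: "ord (k + 1) = ord k \<and> k + 1 \<le> Max (cls k)" if k: "i \<le> k" "k \<le> j" "even (k - i)" for k
  proof -
    obtain d where d: "k = i + 2 * d" using k by (metis evenE le_add_diff_inverse)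
    have ev: "even (k - Min (cls k))" using claim[of d] d k by simp
    have rb: "k < r" "pstar (fs ! k) = - c * fs ! k" using run_basic[OF run, of k] k by auto
    note co = cls_odd[OF rb]
    note cp = cls_props[OF rb(1)]
    have "k \<noteq> Max (cls k)" using co(1) ev by auto
    then have "Min (cls k) \<le> k + 1 \<and> k + 1 \<le> Max (cls k)" using co by linarith
    then have "k + 1 \<in> cls k" using cp(3)[of "k + 1"] by blast
    then show ?thesis using \<open>Min (cls k) \<le> k + 1 \<and> k + 1 \<le> Max (cls k)\<close> by (simp add: cls_def)
  qed
  show "\<And>k. i \<le> k \<Longrightarrow> k < j \<Longrightarrow> even (k - i) \<Longrightarrow> ord (k + 1) = ord k"
    using pair by simp
  show "even (j - i + 1)"
  proof (rule ccontr)
    assume "odd (j - i + 1)"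
    then have "even (j - i)" by simp
    then have "j + 1 \<le> Max (cls j)" using pair[of j] ij by simp
    moreover have "Max (cls j) \<le> j" using run_basic[OF run, of j] ij by simp
    ultimately show False by simp
  qed
qed

end


abbreviation bd :: "'b::zero mat \<Rightarrow> 'b mat \<Rightarrow> 'b mat" where
  "bd A D \<equiv> four_block_mat A (0\<^sub>m (dim_row A) (dim_col D)) (0\<^sub>m (dim_row D) (dim_col A)) D"

lemma bd_carrier: "A \<in> carrier_mat k k \<Longrightarrow> D \<in> carrier_mat m m \<Longrightarrow> bd A D \<in> carrier_mat (k + m) (k + m)"
  by (rule four_block_carrier_mat)

lemma bd_mult:
  fixes A B :: "'b::semiring_1 mat"
  assumes "A \<in> carrier_mat k k" "B \<in> carrier_mat k k" "D \<in> carrier_mat m m" "E \<in> carrier_mat m m"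
  shows "bd A D * bd B E = bd (A * B) (D * E)"
proof -
  have "bd A D * bd B E = four_block_mat (A * B + 0\<^sub>m k m * 0\<^sub>m m k) (A * 0\<^sub>m k m + 0\<^sub>m k m * E)
    (0\<^sub>m m k * B + D * 0\<^sub>m m k) (0\<^sub>m m k * 0\<^sub>m k m + D * E)"
  proof -
    have e1: "bd A D = four_block_mat A (0\<^sub>m k m) (0\<^sub>m m k) D" "bd B E = four_block_mat B (0\<^sub>m k m) (0\<^sub>m m k) E"
      using assms by auto
    show ?thesis unfolding e1
      by (rule mult_four_block_mat[OF assms(1) zero_carrier_mat zero_carrier_mat assms(3) assms(2) zero_carrier_mat zero_carrier_mat assms(4)])
  qed
  also have "\<dots> = bd (A * B) (D * E)" using assms by simp
  finally show ?thesis .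
qed

lemma bd_one: "bd (1\<^sub>m k) (1\<^sub>m m) = (1\<^sub>m (k + m) :: 'b::semiring_1 mat)"
  by simp

lemma bd_invertible:
  fixes A :: "'b::semiring_1 mat"
  assumes A: "A \<in> carrier_mat k k" and D: "D \<in> carrier_mat m m"
    and iA: "invertible_mat A" and iD: "invertible_mat D"
  shows "invertible_mat (bd A D)"
proof -
  obtain A' where A': "A' \<in> carrier_mat k k" "A * A' = 1\<^sub>m k" "A' * A = 1\<^sub>m k"
    using inv_mat_ex[OF iA A] by blast
  obtain D' where D': "D' \<in> carrier_mat m m" "D * D' = 1\<^sub>m m" "D' * D = 1\<^sub>m m"
    using inv_mat_ex[OF iD D] by blast
  have "bd A D * bd A' D' = 1\<^sub>m (k + m)" using bd_mult[OF A A'(1) D D'(1)] A' D' by simp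
  moreover have "bd A' D' * bd A D = 1\<^sub>m (k + m)" using bd_mult[OF A'(1) A D'(1) D] A' D' by simp
  ultimately show ?thesis unfolding invertible_mat_def inverts_mat_def square_mat.simps
    using bd_carrier[OF A D] bd_carrier[OF A'(1) D'(1)]
    by (metis carrier_matD(1) carrier_matD(2))
qed

lemma bd_star:
  assumes A: "A \<in> carrier_mat k k" and D: "D \<in> carrier_mat m m"
  shows "mat_star (bd A D) = bd (mat_star A) (mat_star (D :: 'a::comm_ring_1 poly mat))"
proof (rule eq_matI)
  fix i j assume "i < dim_row (bd (mat_star A) (mat_star D))" "j < dim_col (bd (mat_star A) (mat_star D))"
  then have ij: "i < k + m" "j < k + m" using A D by auto
  show "mat_star (bd A D) $$ (i, j) = bd (mat_star A) (mat_star D) $$ (i, j)"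
    using ij A D by (auto simp: carrier_matD)
qed (use A D in auto)

lemma bd_smult:
  assumes A: "A \<in> carrier_mat k k" and D: "D \<in> carrier_mat m m"
  shows "c \<cdot>\<^sub>m bd A D = bd (c \<cdot>\<^sub>m A) (c \<cdot>\<^sub>m (D :: 'b::semiring_1 mat))"
proof (rule eq_matI)
  fix i j assume "i < dim_row (bd (c \<cdot>\<^sub>m A) (c \<cdot>\<^sub>m D))" "j < dim_col (bd (c \<cdot>\<^sub>m A) (c \<cdot>\<^sub>m D))"
  then have ij: "i < k + m" "j < k + m" using A D by auto
  show "(c \<cdot>\<^sub>m bd A D) $$ (i, j) = bd (c \<cdot>\<^sub>m A) (c \<cdot>\<^sub>m D) $$ (i, j)"
    using ij A D by (auto simp: carrier_matD)
qed (use A D in auto)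

lemma diag_list_append: "diag_list (xs @ ys) = bd (diag_list xs) (diag_list ys)"
  by (rule eq_matI) (auto simp: diag_list_def nth_append)

definition realizes :: "'a::comm_ring_1 poly \<Rightarrow> 'a poly list \<Rightarrow> bool" where
  "realizes c fs \<longleftrightarrow> (\<exists>A P Q. A \<in> carrier_mat (length fs) (length fs) \<and> P \<in> carrier_mat (length fs) (length fs)
     \<and> Q \<in> carrier_mat (length fs) (length fs) \<and> invertible_mat P \<and> invertible_mat Q
     \<and> mat_star A = c \<cdot>\<^sub>m A \<and> P * A * Q = diag_list fs)"

lemma realizes_append:
  assumes "realizes c xs" "realizes c ys"
  shows "realizes c (xs @ ys)"
proof -
  obtain A P Q where X: "A \<in> carrier_mat (length xs) (length xs)" "P \<in> carrier_mat (length xs) (length xs)"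
     "Q \<in> carrier_mat (length xs) (length xs)" "invertible_mat P" "invertible_mat Q"
     "mat_star A = c \<cdot>\<^sub>m A" "P * A * Q = diag_list xs"
    using assms(1) unfolding realizes_def by blast
  obtain A' P' Q' where Y: "A' \<in> carrier_mat (length ys) (length ys)" "P' \<in> carrier_mat (length ys) (length ys)"
     "Q' \<in> carrier_mat (length ys) (length ys)" "invertible_mat P'" "invertible_mat Q'"
     "mat_star A' = c \<cdot>\<^sub>m A'" "P' * A' * Q' = diag_list ys"
    using assms(2) unfolding realizes_def by blast
  have "bd P P' * bd A A' * bd Q Q' = bd (P * A) (P' * A') * bd Q Q'"
    using X Y by (simp only: bd_mult)
  also have "\<dots> = bd (P * A * Q) (P' * A' * Q')"
    using X Y by (intro bd_mult) auto
  also have "\<dots> = diag_list (xs @ ys)" using X Y by (simp add: diag_list_append)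
  finally have e: "bd P P' * bd A A' * bd Q Q' = diag_list (xs @ ys)" .
  have "mat_star (bd A A') = bd (mat_star A) (mat_star A')" by (rule bd_star[OF X(1) Y(1)])
  also have "\<dots> = bd (c \<cdot>\<^sub>m A) (c \<cdot>\<^sub>m A')" by (simp only: X(6) Y(6))
  also have "\<dots> = c \<cdot>\<^sub>m bd A A'" by (rule bd_smult[OF X(1) Y(1), symmetric])
  finally have "mat_star (bd A A') = c \<cdot>\<^sub>m bd A A'" .
  then show ?thesis unfolding realizes_def
    using e bd_carrier[OF X(1) Y(1)] bd_carrier[OF X(2) Y(2)] bd_carrier[OF X(3) Y(3)]
      bd_invertible[OF X(2) Y(2) X(4) Y(4)] bd_invertible[OF X(3) Y(3) X(5) Y(5)]
    by (intro exI[of _ "bd A A'"] exI[of _ "bd P P'"] exI[of _ "bd Q Q'"]) simp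
qed


lemma bezout_field_poly:
  fixes a b :: "'a::field poly"
  assumes cp: "coprime a b" and a0: "a \<noteq> 0"
  shows "\<exists>u w. u * a + w * b = 1"
proof -
  define S where "S = {d. d \<noteq> 0 \<and> (\<exists>u w. d = u * a + w * b)}"
  have "a \<in> S" unfolding S_def using a0 by (intro CollectI conjI exI[of _ 1] exI[of _ 0]) simp_all
  then have ex: "\<exists>n. \<exists>d\<in>S. degree d = n" by blast
  define n where "n = (LEAST n. \<exists>d\<in>S. degree d = n)"
  obtain d where dS: "d \<in> S" and dn: "degree d = n" using LeastI_ex[OF ex] by (auto simp: n_def)
  have minimal: "degree d \<le> degree e" if "e \<in> S" for e
    using that Least_le[of "\<lambda>n. \<exists>d\<in>S. degree d = n" "degree e"] dn by (auto simp: n_def)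
  obtain u0 w0 where d: "d = u0 * a + w0 * b" and d0: "d \<noteq> 0" using dS by (auto simp: S_def)
  have dvd: "d dvd x" if x: "x = a \<or> x = b" for x
  proof -
    have "x mod d = x - (x div d) * d" by (simp add: minus_div_mult_eq_mod)
    then have xm: "x mod d = (if x = a then 1 - (x div d) * u0 else - (x div d) * u0) * a
                        + (if x = a then - (x div d) * w0 else 1 - (x div d) * w0) * b"
      using x d by (auto simp: algebra_simps)
    moreover have "x mod d = 0"
    proof (rule ccontr)
      assume nz: "x mod d \<noteq> 0"
      with xm have "x mod d \<in> S" unfolding S_def by blast
      then have "degree d \<le> degree (x mod d)" by (rule minimal)
      moreover have "degree (x mod d) < degree d" using nz d0 by (simp add: degree_mod_less')
      ultimately show False by simp
    qed
    then show ?thesis by (simp add: mod_eq_0_iff_dvd)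
  qed
  have "is_unit d" using coprime_common_divisor[OF cp dvd[of a] dvd[of b]] by simp
  then obtain k where dk: "d = [:k:]" and k0: "k \<noteq> 0" using d0
    by (metis is_unit_iff_degree degree_eq_zeroE pCons_eq_0_iff)
  have "smult (inverse k) u0 * a + smult (inverse k) w0 * b = smult (inverse k) d"
    by (simp add: d algebra_simps smult_add_right)
  also have "\<dots> = 1" using dk k0 by (simp add: one_pCons)
  finally show ?thesis by blast
qed


definition m2 :: "'b::zero \<Rightarrow> 'b \<Rightarrow> 'b \<Rightarrow> 'b \<Rightarrow> 'b mat" where
  "m2 a b c d = mat 2 2 (\<lambda>(i,j). if i = 0 then (if j = 0 then a else b) else (if j = 0 then c else d))"

lemma m2_carrier[simp]: "m2 a b c d \<in> carrier_mat 2 2"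
  by (simp add: m2_def)

lemma m2_dims[simp]: "dim_row (m2 a b c d) = 2" "dim_col (m2 a b c d) = 2"
  by (simp_all add: m2_def)

lemma less2: "(i::nat) < 2 \<longleftrightarrow> i = 0 \<or> i = 1" by auto

lemma m2_index: "m2 a b c d $$ (0,0) = a" "m2 a b c d $$ (0,1) = b" "m2 a b c d $$ (1,0) = c" "m2 a b c d $$ (1,1) = d"
  by (simp_all add: m2_def)

lemma m2_eqI:
  assumes "M \<in> carrier_mat 2 2" "M $$ (0,0) = a" "M $$ (0,1) = b" "M $$ (1,0) = c" "M $$ (1,1) = d"
  shows "M = m2 a b c d"
proof (rule eq_matI)
  fix i j assume "i < dim_row (m2 a b c d)" "j < dim_col (m2 a b c d)"
  then have "i = 0 \<or> i = 1" "j = 0 \<or> j = 1" by auto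
  then show "M $$ (i, j) = m2 a b c d $$ (i, j)" using assms by (auto simp: m2_def)
qed (use assms in auto)

lemma m2_mult: "m2 a b c d * m2 a' b' c' d' = m2 (a*a' + b*c') (a*b' + b*d') (c*a' + d*c') (c*b' + d*d' :: 'b::semiring_1)"
proof (rule m2_eqI)
  have s: "(\<Sum>k\<in>{0..<2}. f k) = f 0 + f (1::nat)" for f :: "nat \<Rightarrow> 'b"
    by (simp add: numeral_2_eq_2)
  show "m2 a b c d * m2 a' b' c' d' \<in> carrier_mat 2 2" by (rule mult_carrier_mat) auto
  show "(m2 a b c d * m2 a' b' c' d') $$ (0, 0) = a * a' + b * c'"
    by (simp add: scalar_prod_def s m2_def)
  show "(m2 a b c d * m2 a' b' c' d') $$ (0, 1) = a * b' + b * d'"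
    by (simp add: scalar_prod_def s m2_def)
  show "(m2 a b c d * m2 a' b' c' d') $$ (1, 0) = c * a' + d * c'"
    by (simp add: scalar_prod_def s m2_def)
  show "(m2 a b c d * m2 a' b' c' d') $$ (1, 1) = c * b' + d * d'"
    by (simp add: scalar_prod_def s m2_def)
qed

lemma m2_one: "m2 1 0 0 1 = (1\<^sub>m 2 :: 'b::semiring_1 mat)"
  by (rule sym, rule m2_eqI) auto

lemma m2_star: "mat_star (m2 a b c d) = m2 (pstar a) (pstar c) (pstar b) (pstar (d::'a::comm_ring_1 poly))"
  by (rule m2_eqI) (auto simp: m2_def)

lemma m2_smult: "x \<cdot>\<^sub>m m2 a b c d = m2 (x*a) (x*b) (x*c) (x*d :: 'b::semiring_1)"
  by (rule m2_eqI) (auto simp: m2_def)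

lemma diag_list2: "diag_list [f, g] = m2 f 0 0 g"
  by (rule m2_eqI) (auto simp: diag_list_def)

lemma m2_invertible:
  assumes "m2 a b c d * m2 a' b' c' d' = 1\<^sub>m 2" "m2 a' b' c' d' * m2 a b c d = 1\<^sub>m 2"
  shows "invertible_mat (m2 a b c d :: 'b::semiring_1 mat)"
  using assms unfolding invertible_mat_def inverts_mat_def square_mat.simps by auto

lemma invertible_one: "invertible_mat (1\<^sub>m k :: 'b::semiring_1 mat)"
  unfolding invertible_mat_def inverts_mat_def square_mat.simps by (intro conjI exI[of _ "1\<^sub>m k"]) simp_all

lemma realizes_nil: "realizes c []"
proof -
  have "1\<^sub>m 0 * 0\<^sub>m 0 0 * 1\<^sub>m 0 = diag_list []" by (rule eq_matI) (simp_all add: diag_list_def)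
  moreover have "mat_star (0\<^sub>m 0 0) = c \<cdot>\<^sub>m (0\<^sub>m 0 0 :: 'a poly mat)" by (rule eq_matI) simp_all
  moreover have "(0\<^sub>m 0 0 :: 'a poly mat) \<in> carrier_mat (length []) (length [])" "(1\<^sub>m 0 :: 'a poly mat) \<in> carrier_mat (length []) (length [])"
    by simp_all
  ultimately show ?thesis unfolding realizes_def using invertible_one[of 0] by blast
qed

lemma realizes_single:
  assumes "pstar f = c * f"
  shows "realizes c [f]"
proof -
  define A where "A = mat 1 1 (\<lambda>_. f)"
  have A: "A \<in> carrier_mat 1 1" by (simp add: A_def)
  have "mat_star A = c \<cdot>\<^sub>m A" by (rule eq_matI) (auto simp: A_def assms)
  moreover have "1\<^sub>m 1 * A * 1\<^sub>m 1 = diag_list [f]" using A by (auto intro!: eq_matI simp: A_def diag_list_def)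
  moreover have "A \<in> carrier_mat (length [f]) (length [f])" "(1\<^sub>m 1 :: 'a poly mat) \<in> carrier_mat (length [f]) (length [f])"
    using A by simp_all
  ultimately show ?thesis unfolding realizes_def using invertible_one[of 1] by blast
qed

lemma realizes_pair:
  fixes f p :: "'a::field poly"
  assumes pf: "pstar f = - c * f" and pp: "pure p" and g: "g = f * p * pstar p"
  shows "realizes c [f, g]"
proof -
  define s where "s = pstar p"
  have cp: "coprime p s" using pp by (simp add: pure_def s_def)
  have p0: "p \<noteq> 0" using pp by (simp add: pure_def)
  obtain u w where uw: "u * p + w * s = 1" using bezout_field_poly[OF cp p0] by blast
  define B where "B = m2 0 (f * p) (- (f * s)) 0"
  define P where "P = m2 u (- w) (- s) (- p)"
  define Q where "Q = m2 1 (u * p) 1 (- (w * s))"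
  have PBQ: "P * B * Q \<in> carrier_mat 2 2" unfolding P_def B_def Q_def m2_mult by simp
  have "P * B * Q = m2 f 0 0 g"
  proof (rule m2_eqI[OF PBQ])
    have "(P * B * Q) $$ (0,0) = f * (u * p + w * s)"
      unfolding P_def B_def Q_def m2_mult m2_index by (simp add: algebra_simps)
    then show "(P * B * Q) $$ (0,0) = f" using uw by simp
    show "(P * B * Q) $$ (0,1) = 0"
      unfolding P_def B_def Q_def m2_mult m2_index by (simp add: algebra_simps)
    show "(P * B * Q) $$ (1,0) = 0"
      unfolding P_def B_def Q_def m2_mult m2_index by (simp add: algebra_simps)
    have "(P * B * Q) $$ (1,1) = f * p * s * (u * p + w * s)"
      unfolding P_def B_def Q_def m2_mult m2_index by (simp add: algebra_simps)
    then show "(P * B * Q) $$ (1,1) = g" using uw g by (simp add: s_def)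
  qed
  then have e: "P * B * Q = diag_list [f, g]" by (simp add: diag_list2)
  have iP: "invertible_mat P"
    unfolding P_def
  proof (rule m2_invertible)
    have "m2 u (- w) (- s) (- p) * m2 p (- w) (- s) (- u) = m2 (u * p + w * s) 0 0 (u * p + w * s)"
      unfolding m2_mult by (simp add: algebra_simps)
    then show "m2 u (- w) (- s) (- p) * m2 p (- w) (- s) (- u) = 1\<^sub>m 2" using uw by (simp add: m2_one)
    have "m2 p (- w) (- s) (- u) * m2 u (- w) (- s) (- p) = m2 (u * p + w * s) 0 0 (u * p + w * s)"
      unfolding m2_mult by (simp add: algebra_simps)
    then show "m2 p (- w) (- s) (- u) * m2 u (- w) (- s) (- p) = 1\<^sub>m 2" using uw by (simp add: m2_one)
  qed
  have iQ: "invertible_mat Q"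
    unfolding Q_def
  proof (rule m2_invertible)
    have "m2 1 (u * p) 1 (- (w * s)) * m2 (w * s) (u * p) 1 (- 1) = m2 (u * p + w * s) 0 0 (u * p + w * s)"
      unfolding m2_mult by (simp add: algebra_simps)
    then show "m2 1 (u * p) 1 (- (w * s)) * m2 (w * s) (u * p) 1 (- 1) = 1\<^sub>m 2" using uw by (simp add: m2_one)
    have "m2 (w * s) (u * p) 1 (- 1) * m2 1 (u * p) 1 (- (w * s)) = m2 (u * p + w * s) 0 0 (u * p + w * s)"
      unfolding m2_mult by (simp add: algebra_simps)
    then show "m2 (w * s) (u * p) 1 (- 1) * m2 1 (u * p) 1 (- (w * s)) = 1\<^sub>m 2" using uw by (simp add: m2_one)
  qed
  have "mat_star B = c \<cdot>\<^sub>m B"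
    unfolding B_def m2_star m2_smult using pf by (simp add: s_def algebra_simps)
  moreover have "B \<in> carrier_mat (length [f,g]) (length [f,g])" "P \<in> carrier_mat (length [f,g]) (length [f,g])"
    "Q \<in> carrier_mat (length [f,g]) (length [f,g])" using m2_carrier
    by (simp_all only: B_def P_def Q_def list.size numeral_2_eq_2) simp_all
  ultimately show ?thesis unfolding realizes_def using e iP iQ by blast
qed


lemma run_shift1:
  assumes nP: "\<not> P f" and rc: "run_conditions P (f # ys)"
  shows "run_conditions P ys"
  unfolding run_conditions_def
proof (intro allI impI)
  fix i j assume mr: "maximal_run P ys i j"
  have M: "i \<le> j" "j < length ys" "\<And>k. i \<le> k \<Longrightarrow> k \<le> j \<Longrightarrow> P (ys ! k)"
    "i = 0 \<or> \<not> P (ys ! (i - 1))" "j + 1 = length ys \<or> \<not> P (ys ! (j + 1))"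
    using mr unfolding maximal_run_def by auto
  have mr': "maximal_run P (f # ys) (i + 1) (j + 1)"
    unfolding maximal_run_def
  proof (intro conjI allI impI)
    show "i + 1 \<le> j + 1" "j + 1 < length (f # ys)" using M by auto
    fix k assume "i + 1 \<le> k \<and> k \<le> j + 1"
    then obtain k' where "k = Suc k'" "i \<le> k'" "k' \<le> j" by (cases k) auto
    then show "P ((f # ys) ! k)" using M(3) by simp
  next
    show "i + 1 = 0 \<or> \<not> P ((f # ys) ! (i + 1 - 1))"
      using M(4) nP by (cases i) auto
    show "j + 1 + 1 = length (f # ys) \<or> \<not> P ((f # ys) ! (j + 1 + 1))"
      using M(5) by simp
  qed
  from rc[unfolded run_conditions_def, rule_format, OF mr'] have
    e: "even (j + 1 - (i + 1) + 1)" and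
    pr: "\<And>k. i + 1 \<le> k \<and> k < j + 1 \<and> even (k - (i + 1)) \<Longrightarrow>
      (\<exists>p. pure p \<and> (f # ys) ! (k + 1) = (f # ys) ! k * p * pstar p)" by auto
  show "even (j - i + 1) \<and> (\<forall>k. i \<le> k \<and> k < j \<and> even (k - i) \<longrightarrow> (\<exists>p. pure p \<and> ys ! (k + 1) = ys ! k * p * pstar p))"
  proof (intro conjI allI impI)
    show "even (j - i + 1)" using e by simp
    fix k assume k: "i \<le> k \<and> k < j \<and> even (k - i)"
    then have h: "i + 1 \<le> k + 1 \<and> k + 1 < j + 1 \<and> even (k + 1 - (i + 1))" by auto
    from pr[OF h] show "\<exists>p. pure p \<and> ys ! (k + 1) = ys ! k * p * pstar p" by simp
  qed
qed

lemma run_shift2: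
  assumes Pf: "P f" and Pg: "P g" and rc: "run_conditions P (f # g # zs)"
  shows "run_conditions P zs"
  unfolding run_conditions_def
proof (intro allI impI)
  fix i j assume mr: "maximal_run P zs i j"
  define i' where "i' = (if i = 0 then 0 else i + 2)"
  have M: "i \<le> j" "j < length zs" "\<And>k. i \<le> k \<Longrightarrow> k \<le> j \<Longrightarrow> P (zs ! k)"
    "i = 0 \<or> \<not> P (zs ! (i - 1))" "j + 1 = length zs \<or> \<not> P (zs ! (j + 1))"
    using mr unfolding maximal_run_def by auto
  have mr': "maximal_run P (f # g # zs) i' (j + 2)"
    unfolding maximal_run_def
  proof (intro conjI allI impI)
    show "i' \<le> j + 2" "j + 2 < length (f # g # zs)" using M by (auto simp: i'_def)
    fix k assume k: "i' \<le> k \<and> k \<le> j + 2"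
    show "P ((f # g # zs) ! k)"
    proof (cases "k < 2")
      case True then have "k = 0 \<or> k = 1" by auto
      then show ?thesis using Pf Pg by auto
    next
      case False
      then obtain k' where kk: "k = k' + 2" by (metis add.commute le_Suc_ex not_less)
      have "i \<le> k'" "k' \<le> j" using k kk by (auto simp: i'_def split: if_splits)
      then show ?thesis using M(3) kk by (simp add: numeral_2_eq_2)
    qed
  next
    show "i' = 0 \<or> \<not> P ((f # g # zs) ! (i' - 1))"
    proof (cases "i = 0")
      case False
      then have "\<not> P (zs ! (i - 1))" using M(4) by simp
      moreover have "(f # g # zs) ! (i' - 1) = zs ! (i - 1)" using False
        by (cases i) (auto simp: i'_def numeral_2_eq_2)
      ultimately show ?thesis by simp
    qed (simp add: i'_def)
    show "j + 2 + 1 = length (f # g # zs) \<or> \<not> P ((f # g # zs) ! (j + 2 + 1))"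
      using M(5) by (simp add: numeral_2_eq_2)
  qed
  have ii: "i' \<le> i + 2" and i'i: "even (i + 2 - i')" by (simp_all add: i'_def)
  from rc[unfolded run_conditions_def, rule_format, OF mr'] have
    e: "even (j + 2 - i' + 1)" and
    pr: "\<And>k. i' \<le> k \<and> k < j + 2 \<and> even (k - i') \<Longrightarrow>
      (\<exists>p. pure p \<and> (f # g # zs) ! (k + 1) = (f # g # zs) ! k * p * pstar p)" by auto
  show "even (j - i + 1) \<and> (\<forall>k. i \<le> k \<and> k < j \<and> even (k - i) \<longrightarrow> (\<exists>p. pure p \<and> zs ! (k + 1) = zs ! k * p * pstar p))"
  proof (intro conjI allI impI)
    show "even (j - i + 1)"
    proof (cases "i = 0")
      case True then show ?thesis using e by (simp add: i'_def)
    next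
      case False
      then have "j + 2 - i' + 1 = j - i + 1" using M(1) by (simp add: i'_def)
      then show ?thesis using e by simp
    qed
    fix k assume k: "i \<le> k \<and> k < j \<and> even (k - i)"
    have "even (k + 2 - i')"
    proof (cases "i = 0")
      case True then show ?thesis using k by (simp add: i'_def)
    next
      case False
      then have eq: "k + 2 - i' = k - i" using k by (simp add: i'_def)
      show ?thesis unfolding eq using k by blast
    qed
    then have h: "i' \<le> k + 2 \<and> k + 2 < j + 2 \<and> even (k + 2 - i')" using k ii by simp
    from pr[OF h] show "\<exists>p. pure p \<and> zs ! (k + 1) = zs ! k * p * pstar p" by (simp add: numeral_2_eq_2)
  qed
qed


lemma run_from_0:
  assumes "P (xs ! 0)" "xs \<noteq> []"
  shows "\<exists>j. maximal_run P xs 0 j"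
proof -
  define Cn where "Cn j \<longleftrightarrow> j + 1 = length xs \<or> \<not> P (xs ! (j + 1))" for j
  have ex: "Cn (length xs - 1)" using assms by (simp add: Cn_def)
  define j where "j = (LEAST j. Cn j)"
  have Cj: "Cn j" using LeastI[of Cn, OF ex] by (simp add: j_def)
  have jl: "j \<le> length xs - 1" using Least_le[of Cn, OF ex] by (simp add: j_def)
  have all: "P (xs ! k)" if "k \<le> j" for k
  proof (cases k)
    case 0 then show ?thesis using assms by simp
  next
    case (Suc k')
    then have "k' < j" using that by simp
    then have "\<not> Cn k'" using not_less_Least[of k' Cn] by (simp add: j_def)
    then show ?thesis using Suc by (simp add: Cn_def)
  qed
  have jl': "j < length xs" using jl assms(2) by (cases xs) auto
  have "maximal_run P xs 0 j"
    unfolding maximal_run_def using jl' Cj all by (auto simp: Cn_def)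
  then show ?thesis by blast
qed

lemma realizes_runs:
  fixes xs :: "'a::field poly list"
  assumes c: "c = 1 \<or> c = -1" and hom: "\<forall>x\<in>set xs. pstar x = x \<or> pstar x = - x"
    and rc: "run_conditions (\<lambda>a. a \<noteq> 0 \<and> pstar a = - c * a) xs"
  shows "realizes c xs"
  using hom rc
proof (induction xs rule: length_induct)
  case (1 xs)
  let ?P = "\<lambda>a::'a poly. a \<noteq> 0 \<and> pstar a = - c * a"
  show ?case
  proof (cases xs)
    case Nil then show ?thesis by (simp add: realizes_nil)
  next
    case (Cons f ys)
    show ?thesis
    proof (cases "?P f")
      case False
      have "pstar f = c * f"
      proof (cases "f = 0")
        case False
        with \<open>\<not> ?P f\<close> have "pstar f \<noteq> - c * f" by simp
        moreover have "pstar f = f \<or> pstar f = - f" using "1.prems"(1) Cons by simp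
        ultimately show ?thesis using c by auto
      qed simp
      then have r1: "realizes c [f]" by (rule realizes_single)
      have "run_conditions ?P ys" using run_shift1[of ?P f ys] False "1.prems"(2) Cons by simp
      then have "realizes c ys" using "1.IH" "1.prems"(1) Cons by simp
      then show ?thesis using realizes_append[OF r1] Cons by simp
    next
      case True
      then obtain j where mr: "maximal_run ?P xs 0 j" using run_from_0[of ?P xs] Cons by auto
      have rcx: "run_conditions ?P xs" by (rule "1.prems"(2))
      from rcx[unfolded run_conditions_def, rule_format, OF mr]
      have ev: "even (j + 1)" and pr: "\<And>k. k < j \<and> even k \<Longrightarrow> \<exists>p. pure p \<and> xs ! (k + 1) = xs ! k * p * pstar p"
        by auto
      have j1: "1 \<le> j" using ev by (cases j) auto
      have jl: "j < length xs" and allP: "\<And>k. k \<le> j \<Longrightarrow> ?P (xs ! k)" using mr by (auto simp: maximal_run_def)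
      obtain g zs where ys: "ys = g # zs" using jl j1 Cons by (cases ys) auto
      have xs: "xs = f # g # zs" using Cons ys by simp
      obtain p where p: "pure p" "xs ! 1 = xs ! 0 * p * pstar p" using pr[of 0] j1 by auto
      have g: "g = f * p * pstar p" using p xs by simp
      have Pg: "?P g" using allP[of 1] j1 xs by simp
      have r2: "realizes c [f, g]" using realizes_pair[of f c p g] True p(1) g by simp
      have "run_conditions ?P zs" using run_shift2[of ?P f g zs] True Pg rcx xs by simp
      then have "realizes c zs" using "1.IH" "1.prems"(1) xs by simp
      then show ?thesis using realizes_append[OF r2] xs by simp
    qed
  qed
qed


lemma det_zero_row:
  fixes M :: "'b::comm_ring_1 mat"
  assumes M: "M \<in> carrier_mat k k" and rho: "\<rho> < k" and z: "\<And>j. j < k \<Longrightarrow> M $$ (\<rho>, j) = 0"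
  shows "det M = 0"
proof -
  have "multrow \<rho> 0 M = M"
    by (rule eq_matI) (use M z in \<open>auto simp: mat_multrow_def\<close>)
  then have "det M = 0 * det M" using det_multrow[OF rho M, of 0] by simp
  then show ?thesis by simp
qed

lemma pick_lessThan: "i < r \<Longrightarrow> pick {..<r} i = i"
proof -
  assume i: "i < r"
  have c: "i < card {..<r}" using i by simp
  have pin: "pick {..<r} i \<in> {..<r}" using pick_in_set[of i "{..<r}"] c by blast
  have "card {a \<in> {..<r}. a < pick {..<r} i} = i" using card_pick[of i "{..<r}"] c by blast
  moreover have "{a \<in> {..<r}. a < pick {..<r} i} = {..<pick {..<r} i}" using pin by auto
  ultimately show ?thesis by simp
qed

lemma pick_ge: "i < card I \<Longrightarrow> i \<le> pick I i"
proof -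
  assume c: "i < card I"
  have "card {a \<in> I. a < pick I i} = i" using card_pick[of i I] c by blast
  moreover have "card {a \<in> I. a < pick I i} \<le> card {..<pick I i}" by (rule card_mono) auto
  ultimately show ?thesis by simp
qed

lemma det_rank_bd:
  fixes A1 :: "'b::idom mat"
  assumes A1: "A1 \<in> carrier_mat r r" and d: "det A1 \<noteq> 0"
  shows "det_rank (bd A1 (0\<^sub>m m m)) = r"
proof -
  define A where "A = bd A1 (0\<^sub>m m m)"
  have A: "A \<in> carrier_mat (r + m) (r + m)" using A1 by (simp add: A_def bd_carrier)
  have Az: "A $$ (i,j) = 0" if "r \<le> i" "i < r + m" "j < r + m" for i j
    using that A1 by (auto simp: A_def)
  define S where "S = {k. \<exists>I J. I \<subseteq> {..<dim_row A} \<and> J \<subseteq> {..<dim_col A} \<and>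
      card I = k \<and> card J = k \<and> det (submatrix A I J) \<noteq> 0}"
  have rS: "r \<in> S"
  proof -
    have rows: "{i. i < dim_row A \<and> i \<in> {..<r}} = {..<r}" "{i. i < dim_col A \<and> i \<in> {..<r}} = {..<r}"
      using A by auto
    have rows2: "{i. i < dim_row A \<and> i < r} = {..<r}" "{i. i < dim_col A \<and> i < r} = {..<r}"
      using A by auto
    have "submatrix A {..<r} {..<r} = A1"
    proof (rule eq_matI)
      fix i j assume "i < dim_row A1" "j < dim_col A1"
      then have ij: "i < r" "j < r" using A1 by auto
      have "submatrix A {..<r} {..<r} $$ (i, j) = A $$ (pick {..<r} i, pick {..<r} j)"
        by (rule submatrix_index) (use ij rows in auto)
      also have "\<dots> = A $$ (i, j)" using ij by (simp add: pick_lessThan)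
      also have "\<dots> = A1 $$ (i, j)" using ij A1 by (simp add: A_def)
      finally show "submatrix A {..<r} {..<r} $$ (i, j) = A1 $$ (i, j)" .
    qed (use A1 in \<open>simp_all add: dim_submatrix rows rows2\<close>)
    then show ?thesis unfolding S_def using A d
      by (intro CollectI exI[of _ "{..<r}"]) auto
  qed
  have bound: "k \<le> r" if "k \<in> S" for k
  proof (rule ccontr)
    assume "\<not> k \<le> r"
    then have kr: "r < k" by simp
    have "\<exists>I J. I \<subseteq> {..<dim_row A} \<and> J \<subseteq> {..<dim_col A} \<and>
      card I = k \<and> card J = k \<and> det (submatrix A I J) \<noteq> 0" using that by (simp only: S_def mem_Collect_eq)
    then obtain I J where IJ: "I \<subseteq> {..<dim_row A}" "J \<subseteq> {..<dim_col A}" "card I = k" "card J = k"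
      "det (submatrix A I J) \<noteq> 0" by blast
    have rI: "{i. i < dim_row A \<and> i \<in> I} = I" and rJ: "{i. i < dim_col A \<and> i \<in> J} = J" using IJ by auto
    have "dim_row (submatrix A I J) = k" "dim_col (submatrix A I J) = k"
      by (simp_all only: dim_submatrix rI rJ IJ(3,4))
    then have SM: "submatrix A I J \<in> carrier_mat k k" by (rule carrier_matI)
    define \<rho> where "\<rho> = k - 1"
    have rho: "\<rho> < k" "r \<le> \<rho>" using kr by (auto simp: \<rho>_def)
    have pI: "pick I \<rho> \<in> I" "\<rho> \<le> pick I \<rho>" using pick_in_set[of \<rho> I] pick_ge[of \<rho> I] rho IJ(3) by auto
    have "det (submatrix A I J) = 0"
    proof (rule det_zero_row[OF SM rho(1)])
      fix j assume j: "j < k"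
      have pJ: "pick J j \<in> J" using pick_in_set[of j J] j IJ(4) by auto
      have "submatrix A I J $$ (\<rho>, j) = A $$ (pick I \<rho>, pick J j)"
        using rho j IJ by (simp add: submatrix_index rI rJ)
      also have "\<dots> = 0" using Az[of "pick I \<rho>" "pick J j"] pI pJ IJ rho A by auto
      finally show "submatrix A I J $$ (\<rho>, j) = 0" .
    qed
    then show False using IJ by simp
  qed
  have fin: "finite S" using bound by (meson finite_nat_set_iff_bounded_le)
  have "Max S = r" by (rule Max_eqI[OF fin]) (use bound rS in auto)
  then show ?thesis by (simp add: det_rank_def S_def A_def)
qed


lemma run_take:
  assumes nP: "\<And>i. r \<le> i \<Longrightarrow> i < length fs \<Longrightarrow> \<not> P (fs ! i)" and rl: "r \<le> length fs"
    and rc: "run_conditions P fs"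
  shows "run_conditions P (take r fs)"
  unfolding run_conditions_def
proof (intro allI impI)
  fix i j assume mr: "maximal_run P (take r fs) i j"
  have M: "i \<le> j" "j < r" "\<And>k. i \<le> k \<Longrightarrow> k \<le> j \<Longrightarrow> P (fs ! k)"
    "i = 0 \<or> \<not> P (fs ! (i - 1))" "j + 1 = r \<or> \<not> P (fs ! (j + 1))"
    using mr rl unfolding maximal_run_def by (auto simp: min_def split: if_splits)
  have mr': "maximal_run P fs i j"
    unfolding maximal_run_def
  proof (intro conjI allI impI)
    show "i \<le> j" "j < length fs" using M rl by auto
    show "\<And>k. i \<le> k \<and> k \<le> j \<Longrightarrow> P (fs ! k)" using M by auto
    show "i = 0 \<or> \<not> P (fs ! (i - 1))" using M by auto
    show "j + 1 = length fs \<or> \<not> P (fs ! (j + 1))"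
      using M(5) M(2) rl nP[of "j + 1"] by (cases "j + 1 < length fs") auto
  qed
  from rc[unfolded run_conditions_def, rule_format, OF mr']
  show "even (j - i + 1) \<and> (\<forall>k. i \<le> k \<and> k < j \<and> even (k - i) \<longrightarrow>
     (\<exists>p. pure p \<and> take r fs ! (k + 1) = take r fs ! k * p * pstar p))"
    using M(2) by auto
qed

lemma det_diag_list: "det (diag_list xs) = prod_list (xs :: 'b::comm_ring_1 list)"
proof -
  have "det (diag_list xs) = prod_list (diag_mat (diag_list xs))"
    by (rule det_upper_triangular[of _ "length xs"]) (auto simp: diag_list_def)
  also have "diag_mat (diag_list xs) = xs"
    by (rule nth_equalityI) (auto simp: diag_mat_def diag_list_def)
  finally show ?thesis .
qed


lemma only_if_dir:
  fixes fs :: "'a::alg_closed_field poly list" and n r :: nat and c :: "'a poly"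
  assumes char: "(2::'a) \<noteq> 0"
    and len: "length fs = n"
    and rn: "r \<le> n"
    and hom: "\<forall>i < n. homogeneous (fs ! i)"
    and mon: "\<forall>i < r. lead_coeff (fs ! i) = 1"
    and dvd: "\<forall>i. i + 1 < r \<longrightarrow> fs ! i dvd fs ! (i + 1)"
    and zero: "\<forall>i. r \<le> i \<and> i < n \<longrightarrow> fs ! i = 0"
    and c: "c = 1 \<or> c = -1"
    and Ah: "mat_star A = c \<cdot>\<^sub>m A" and inv: "invariant_factors A fs"
  shows "run_conditions (\<lambda>a. a \<noteq> 0 \<and> pstar a = - c * a) fs"
proof -
  from inv len obtain P Q where A: "A \<in> carrier_mat n n" and P: "P \<in> carrier_mat n n" and Q: "Q \<in> carrier_mat n n"
    and iP: "invertible_mat P" and iQ: "invertible_mat Q" and PAQ: "P * A * Q = diag_list fs"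
    unfolding invariant_factors_def Let_def by blast
  obtain Pi where Pi: "Pi \<in> carrier_mat n n" "P * Pi = 1\<^sub>m n" "Pi * P = 1\<^sub>m n" using inv_mat_ex[OF iP P] by blast
  obtain Qi where Qi: "Qi \<in> carrier_mat n n" "Q * Qi = 1\<^sub>m n" "Qi * Q = 1\<^sub>m n" using inv_mat_ex[OF iQ Q] by blast
  define W where "W = mat_star Q * Pi"
  define W' where "W' = P * mat_star Qi"
  have sQ: "mat_star Q \<in> carrier_mat n n" and sQi: "mat_star Qi \<in> carrier_mat n n" using Q Qi by auto
  have W: "W \<in> carrier_mat n n" using sQ Pi by (simp add: W_def)
  have W': "W' \<in> carrier_mat n n" using sQi P by (simp add: W'_def)
  have WW: "W * W' = 1\<^sub>m n"
  proof -
    have "W * W' = mat_star Q * (Pi * (P * mat_star Qi))" unfolding W_def W'_def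
      by (rule assoc_mult_mat[OF sQ Pi(1) mult_carrier_mat[OF P sQi]])
    also have "Pi * (P * mat_star Qi) = (Pi * P) * mat_star Qi" by (rule assoc_mult_mat[OF Pi(1) P sQi, symmetric])
    also have "\<dots> = mat_star Qi" using Pi(3) left_mult_one_mat[OF sQi] by simp
    also have "mat_star Q * mat_star Qi = mat_star (Qi * Q)" using mat_star_mult[OF Qi(1) Q] by simp
    also have "\<dots> = 1\<^sub>m n" using Qi by simp
    finally show ?thesis .
  qed
  define B where "B = mat_star Q * (A * Q)"
  have WD: "W * diag_list fs = B"
  proof -
    have PAQc: "P * A * Q \<in> carrier_mat n n" using P A Q by simp
    have "W * diag_list fs = mat_star Q * (Pi * (P * A * Q))" unfolding W_def PAQ[symmetric]
      by (rule assoc_mult_mat[OF sQ Pi(1) PAQc])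
    also have "Pi * (P * A * Q) = ((Pi * P) * A) * Q"
      using assoc_mult_mat[OF Pi(1) mult_carrier_mat[OF P A] Q] assoc_mult_mat[OF Pi(1) P A] by simp
    also have "\<dots> = A * Q" using Pi(3) left_mult_one_mat[OF A] by simp
    finally show ?thesis by (simp add: B_def)
  qed
  have herm: "mat_star (W * diag_list fs) = c \<cdot>\<^sub>m (W * diag_list fs)"
  proof -
    have "mat_star B = mat_star (A * Q) * mat_star (mat_star Q)" unfolding B_def
      by (rule mat_star_mult[OF sQ mult_carrier_mat[OF A Q]])
    also have "\<dots> = (mat_star Q * mat_star A) * Q" using mat_star_mult[OF A Q] by simp
    also have "\<dots> = (mat_star Q * (c \<cdot>\<^sub>m A)) * Q" by (simp add: Ah)
    also have "\<dots> = c \<cdot>\<^sub>m (mat_star Q * A * Q)"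
      using mult_smult_distrib[OF sQ A, of c] mult_smult_assoc_mat[OF mult_carrier_mat[OF sQ A] Q, of c] by simp
    also have "\<dots> = c \<cdot>\<^sub>m B" unfolding B_def using assoc_mult_mat[OF sQ A Q] by simp
    finally show ?thesis by (simp add: WD)
  qed
  have nz: "\<And>i. i < r \<Longrightarrow> fs ! i \<noteq> 0" using mon by fastforce
  interpret cs: core_setup fs n r c W W'
    by (unfold_locales) (use char len rn nz zero hom dvd W W' WW c herm in auto)
  have Peq: "(\<lambda>a. a \<noteq> 0 \<and> pstar a = - c * a) = cs.Pc" by (rule ext) (simp add: cs.Pc_def)
  show ?thesis
    unfolding run_conditions_def Peq
  proof (intro allI impI conjI)
    fix i j assume mr: "maximal_run cs.Pc fs i j"
    show "even (j - i + 1)" using cs.run_props(1)[OF mr] .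
    fix k assume k: "i \<le> k \<and> k < j \<and> even (k - i)"
    have o: "order 0 (fs ! (k + 1)) = order 0 (fs ! k)" using cs.run_props(2)[OF mr] k by blast
    have k1: "k + 1 < r" "pstar (fs ! (k + 1)) = - c * fs ! (k + 1)" using cs.run_basic[OF mr, of "k + 1"] k by auto
    have k0: "pstar (fs ! k) = - c * fs ! k" using cs.run_basic[OF mr, of k] k by auto
    obtain q where q: "fs ! (k + 1) = fs ! k * q" using dvd k1 by blast
    have fk: "fs ! k \<noteq> 0" using nz k1 by simp
    have fk1: "fs ! (k + 1) \<noteq> 0" using nz k1 by simp
    have q0: "q \<noteq> 0" using fk1 q by auto
    have "- c * (fs ! k * pstar q) = - c * (fs ! k * q)"
      using k1(2) k0 q by (simp add: algebra_simps)
    then have ev: "pstar q = q" using fk c by auto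
    have "order 0 (fs ! (k + 1)) = order 0 (fs ! k) + order 0 q" using q fk1 by (simp add: order_mult)
    then have "order 0 q = 0" using o by simp
    then have pq: "poly q 0 \<noteq> 0" using q0 by (simp add: order_root)
    obtain p where p: "pure p" "q = p * pstar p" using pure_factor[OF char ev pq] by blast
    show "\<exists>p. pure p \<and> fs ! (k + 1) = fs ! k * p * pstar p"
      using p q by (intro exI[of _ p]) (simp add: mult.assoc)
  qed
qed


lemma if_dir:
  fixes fs :: "'a::alg_closed_field poly list" and n r :: nat and c :: "'a poly"
  assumes char: "(2::'a) \<noteq> 0"
    and len: "length fs = n"
    and rn: "r \<le> n"
    and hom: "\<forall>i < n. homogeneous (fs ! i)"
    and mon: "\<forall>i < r. lead_coeff (fs ! i) = 1"
    and dvd: "\<forall>i. i + 1 < r \<longrightarrow> fs ! i dvd fs ! (i + 1)"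
    and zero: "\<forall>i. r \<le> i \<and> i < n \<longrightarrow> fs ! i = 0"
    and c: "c = 1 \<or> c = -1"
    and rc: "run_conditions (\<lambda>a. a \<noteq> 0 \<and> pstar a = - c * a) fs"
  shows "\<exists>A. mat_star A = c \<cdot>\<^sub>m A \<and> det_rank A = r \<and> invariant_factors A fs"
proof -
  have nz: "\<And>i. i < r \<Longrightarrow> fs ! i \<noteq> 0" using mon by fastforce
  define xs where "xs = take r fs"
  define m where "m = n - r"
  have lxs: "length xs = r" using len rn by (simp add: xs_def)
  have fsx: "fs = xs @ replicate m 0"
    by (rule nth_equalityI) (use len rn zero in \<open>auto simp: xs_def m_def nth_append\<close>)
  have rcx: "run_conditions (\<lambda>a. a \<noteq> 0 \<and> pstar a = - c * a) xs"
    unfolding xs_def by (rule run_take) (use zero len rn rc in auto)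
  have homx: "\<forall>x\<in>set xs. pstar x = x \<or> pstar x = - x"
  proof
    fix x assume "x \<in> set xs"
    then obtain i where "i < r" "x = fs ! i" using lxs by (auto simp: in_set_conv_nth xs_def)
    then show "pstar x = x \<or> pstar x = - x" using hom rn
      by (auto simp: homogeneous_def even_poly_def odd_poly_def)
  qed
  have "realizes c xs" by (rule realizes_runs[OF c homx rcx])
  then obtain A1 P1 Q1 where A1: "A1 \<in> carrier_mat r r" and P1: "P1 \<in> carrier_mat r r"
    and Q1: "Q1 \<in> carrier_mat r r" and iP1: "invertible_mat P1" and iQ1: "invertible_mat Q1"
    and h1: "mat_star A1 = c \<cdot>\<^sub>m A1" and e1: "P1 * A1 * Q1 = diag_list xs"
    unfolding realizes_def lxs by blast
  have Z: "(0\<^sub>m m m :: 'a poly mat) \<in> carrier_mat m m" "(1\<^sub>m m :: 'a poly mat) \<in> carrier_mat m m" by auto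
  define A where "A = bd A1 (0\<^sub>m m m)"
  define P where "P = bd P1 (1\<^sub>m m)"
  define Q where "Q = bd Q1 (1\<^sub>m m)"
  have nrm: "r + m = n" using rn by (simp add: m_def)
  have Ac: "A \<in> carrier_mat n n" using bd_carrier[OF A1 Z(1)] nrm by (simp add: A_def)
  have Pc: "P \<in> carrier_mat n n" using bd_carrier[OF P1 Z(2)] nrm by (simp add: P_def)
  have Qc: "Q \<in> carrier_mat n n" using bd_carrier[OF Q1 Z(2)] nrm by (simp add: Q_def)
  have iP: "invertible_mat P" unfolding P_def by (rule bd_invertible[OF P1 Z(2) iP1 invertible_one])
  have iQ: "invertible_mat Q" unfolding Q_def by (rule bd_invertible[OF Q1 Z(2) iQ1 invertible_one])
  have "P * A * Q = bd (P1 * A1) (1\<^sub>m m * 0\<^sub>m m m) * Q"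
    unfolding P_def A_def by (simp only: bd_mult[OF P1 A1 Z(2) Z(1)])
  also have "\<dots> = bd (P1 * A1 * Q1) (1\<^sub>m m * 0\<^sub>m m m * 1\<^sub>m m)"
    unfolding Q_def by (rule bd_mult) (use P1 A1 Q1 in auto)
  also have "1\<^sub>m m * 0\<^sub>m m m * 1\<^sub>m m = (0\<^sub>m m m :: 'a poly mat)" by simp
  also have "(0\<^sub>m m m :: 'a poly mat) = diag_list (replicate m 0)"
    by (rule eq_matI) (auto simp: diag_list_def)
  finally have PAQ: "P * A * Q = diag_list fs" unfolding e1 fsx diag_list_append by simp
  have "mat_star A = bd (mat_star A1) (mat_star (0\<^sub>m m m))" unfolding A_def by (rule bd_star[OF A1 Z(1)])
  also have "mat_star (0\<^sub>m m m) = c \<cdot>\<^sub>m (0\<^sub>m m m :: 'a poly mat)" by (rule eq_matI) auto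
  also have "bd (mat_star A1) (c \<cdot>\<^sub>m (0\<^sub>m m m)) = bd (c \<cdot>\<^sub>m A1) (c \<cdot>\<^sub>m (0\<^sub>m m m))" by (simp only: h1)
  also have "\<dots> = c \<cdot>\<^sub>m A" unfolding A_def by (rule bd_smult[OF A1 Z(1), symmetric])
  finally have hA: "mat_star A = c \<cdot>\<^sub>m A" .
  have dA1: "det A1 \<noteq> 0"
  proof
    assume "det A1 = 0"
    then have "det (P1 * A1 * Q1) = 0" using det_mult[OF mult_carrier_mat[OF P1 A1] Q1] det_mult[OF P1 A1] by simp
    moreover have "det (diag_list xs) \<noteq> 0"
      unfolding det_diag_list using nz lxs by (auto simp: prod_list_zero_iff in_set_conv_nth xs_def)
    ultimately show False using e1 by simp
  qed
  have rank: "det_rank A = r" unfolding A_def by (rule det_rank_bd[OF A1 dA1])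
  have "invariant_factors A fs"
    unfolding invariant_factors_def Let_def len
  proof (intro conjI allI impI)
    show "A \<in> carrier_mat n n" by (rule Ac)
    fix i assume "i + 1 < n"
    then show "fs ! i dvd fs ! (i + 1)" using dvd zero by (cases "i + 1 < r") auto
  next
    fix i assume "i < n" "fs ! i \<noteq> 0"
    then show "lead_coeff (fs ! i) = 1" using mon zero by (cases "i < r") auto
  next
    show "\<exists>P Q. P \<in> carrier_mat n n \<and> Q \<in> carrier_mat n n \<and> invertible_mat P \<and> invertible_mat Q \<and> P * A * Q = diag_list fs"
      using Pc Qc iP iQ PAQ by blast
  qed
  then show ?thesis using hA rank by blast
qed


lemma smult_one_mat': "(1::'b::semiring_1) \<cdot>\<^sub>m A = A"
  by (rule eq_matI) auto

lemma smult_neg_one_mat: "(-1::'b::ring_1) \<cdot>\<^sub>m A = - A"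
  by (rule eq_matI) auto

theorem theorem5p1:
  fixes fs :: "'a::alg_closed_field poly list" and n r :: nat
  assumes char: "(2::'a) \<noteq> 0"
    and len: "length fs = n"
    and rn: "r \<le> n"
    and hom: "\<forall>i < n. homogeneous (fs ! i)"
    and mon: "\<forall>i < r. lead_coeff (fs ! i) = 1"
    and dvd: "\<forall>i. i + 1 < r \<longrightarrow> fs ! i dvd fs ! (i + 1)"
    and zero: "\<forall>i. r \<le> i \<and> i < n \<longrightarrow> fs ! i = 0"
  shows "((\<exists>A. hermitian A \<and> det_rank A = r \<and> invariant_factors A fs) \<longleftrightarrow>
            run_conditions (\<lambda>a. a \<noteq> 0 \<and> odd_poly a) fs)
       \<and> ((\<exists>A. skew_hermitian A \<and> det_rank A = r \<and> invariant_factors A fs) \<longleftrightarrow>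
            run_conditions (\<lambda>a. a \<noteq> 0 \<and> even_poly a) fs)"
proof
  have h: "hermitian A \<longleftrightarrow> mat_star A = (1::'a poly) \<cdot>\<^sub>m A" for A :: "'a poly mat"
    by (simp add: hermitian_def smult_one_mat')
  have p: "(\<lambda>a. a \<noteq> 0 \<and> odd_poly a) = (\<lambda>a::'a poly. a \<noteq> 0 \<and> pstar a = - 1 * a)"
    by (rule ext) (simp add: odd_poly_def)
  have c: "(1::'a poly) = 1 \<or> (1::'a poly) = -1" by simp
  show "(\<exists>A. hermitian A \<and> det_rank A = r \<and> invariant_factors A fs) \<longleftrightarrow>
            run_conditions (\<lambda>a. a \<noteq> 0 \<and> odd_poly a) fs"
    unfolding h p
    using only_if_dir[OF char len rn hom mon dvd zero c] if_dir[OF char len rn hom mon dvd zero c]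
    by blast
next
  have h: "skew_hermitian A \<longleftrightarrow> mat_star A = (-1::'a poly) \<cdot>\<^sub>m A" for A :: "'a poly mat"
    by (simp add: skew_hermitian_def smult_neg_one_mat)
  have p: "(\<lambda>a. a \<noteq> 0 \<and> even_poly a) = (\<lambda>a::'a poly. a \<noteq> 0 \<and> pstar a = - (-1) * a)"
    by (rule ext) (simp add: even_poly_def)
  have c: "(-1::'a poly) = 1 \<or> (-1::'a poly) = -1" by simp
  show "(\<exists>A. skew_hermitian A \<and> det_rank A = r \<and> invariant_factors A fs) \<longleftrightarrow>
            run_conditions (\<lambda>a. a \<noteq> 0 \<and> even_poly a) fs"
    unfolding h p
    using only_if_dir[OF char len rn hom mon dvd zero c] if_dir[OF char len rn hom mon dvd zero c]
    by blast
qed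

end
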